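(* Let $W$ be a $p$-regular, $p$-locally dense graphon on $\Omega$. Then the tensor product $W\otimes W$, defined on $\Omega\times\Omega$ (with the product measure) by $(W\otimes W)((x_1,x_2),(y_1,y_2))=W(x_1,y_1)W(x_2,y_2)$, is a $p^2$-regular, $p^2$-locally dense graphon.
   Context: Let $(\Omega,\mu)$ be an atomless standard probability space. A graphon is a symmetric measurable $W:\Omega\times\Omega\to[0,1]$ (graphons equal a.e. are identified). $W$ is $p$-regular if $\int_\Omega W(x,y)\,dy=p$ for a.e. $x$, and $p$-locally dense if $\iint_{U\times U}W(x,y)\,dx\,dy\ge p\,\mu(U)^2$ for every measurable $U\subseteq\Omega$ (the same definitions apply on $\Omega\times\Omega$ with the product measure). *)

theory Defs
  imports "HOL-Probability.Probability"
begin

definition atomless :: "'a measure \<Rightarrow> bool" where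
  "atomless M \<longleftrightarrow> (\<forall>A\<in>sets M. measure M A > 0 \<longrightarrow>
      (\<exists>B\<in>sets M. B \<subseteq> A \<and> 0 < measure M B \<and> measure M B < measure M A))"

definition atomless_standard_prob_space :: "('a::polish_space) measure \<Rightarrow> bool" where
  "atomless_standard_prob_space M \<longleftrightarrow>
     prob_space M \<and> sets M = sets borel \<and> atomless M"

definition graphon :: "'a measure \<Rightarrow> ('a \<Rightarrow> 'a \<Rightarrow> real) \<Rightarrow> bool" where
  "graphon M W \<longleftrightarrow>
     case_prod W \<in> borel_measurable (M \<Otimes>\<^sub>M M) \<and>
     (\<forall>x\<in>space M. \<forall>y\<in>space M. W x y = W y x) \<and>
     (\<forall>x\<in>space M. \<forall>y\<in>space M. 0 \<le> W x y \<and> W x y \<le> 1)"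

definition regular :: "'a measure \<Rightarrow> real \<Rightarrow> ('a \<Rightarrow> 'a \<Rightarrow> real) \<Rightarrow> bool" where
  "regular M p W \<longleftrightarrow> (AE x in M. (\<integral>y. W x y \<partial>M) = p)"

definition locally_dense :: "'a measure \<Rightarrow> real \<Rightarrow> ('a \<Rightarrow> 'a \<Rightarrow> real) \<Rightarrow> bool" where
  "locally_dense M p W \<longleftrightarrow>
     (\<forall>U\<in>sets M. (LINT z:U \<times> U|M \<Otimes>\<^sub>M M. W (fst z) (snd z)) \<ge> p * (measure M U)\<^sup>2)"

definition tensor :: "('a \<Rightarrow> 'a \<Rightarrow> real) \<Rightarrow> ('a \<times> 'a) \<Rightarrow> ('a \<times> 'a) \<Rightarrow> real" where
  "tensor W = (\<lambda>(x1, x2) (y1, y2). W x1 y1 * W x2 y2)"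

end

theory Submission
  imports Defs
begin

lemma prod_int:
  fixes N1 N2 :: "'b measure" and f g :: "'b \<Rightarrow> real"
  assumes "prob_space N1" "prob_space N2"
    and [measurable]: "f \<in> borel_measurable N1" "g \<in> borel_measurable N2"
    and bf: "\<And>x. \<bar>f x\<bar> \<le> Cf" and bg: "\<And>x. \<bar>g x\<bar> \<le> Cg"
  shows "integrable (N1 \<Otimes>\<^sub>M N2) (\<lambda>z. f (fst z) * g (snd z))"
    and "(\<integral>z. f (fst z) * g (snd z) \<partial>(N1 \<Otimes>\<^sub>M N2)) = integral\<^sup>L N1 f * integral\<^sup>L N2 g"
proof -
  interpret pair_prob_space N1 N2 using assms(1,2) by (simp add: pair_prob_space_def pair_sigma_finite_def prob_space_imp_sigma_finite)
  interpret P: prob_space "N1 \<Otimes>\<^sub>M N2" by (simp add: prob_space_pair prob_space_axioms)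
  show I: "integrable (N1 \<Otimes>\<^sub>M N2) (\<lambda>z. f (fst z) * g (snd z))"
    apply (rule P.integrable_const_bound[where B="Cf*Cg"])
    using bf bg by (auto simp: abs_mult intro!: AE_I2 mult_mono) (meson abs_ge_zero order_trans)
  have "(\<integral>z. f (fst z) * g (snd z) \<partial>(N1 \<Otimes>\<^sub>M N2)) = (\<integral>x. (\<integral>y. f x * g y \<partial>N2) \<partial>N1)"
    using integral_fst'[OF I] by simp
  also have "\<dots> = (\<integral>x. f x * integral\<^sup>L N2 g \<partial>N1)" by simp
  also have "\<dots> = integral\<^sup>L N1 f * integral\<^sup>L N2 g" by simp
  finally show "(\<integral>z. f (fst z) * g (snd z) \<partial>(N1 \<Otimes>\<^sub>M N2)) = integral\<^sup>L N1 f * integral\<^sup>L N2 g" .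
qed

lemma small_partition:
  fixes M :: "'a::polish_space measure"
  assumes PS: "prob_space M" and SB: "sets M = sets borel" and pt: "\<And>x. measure M {x} = 0" and e: "\<epsilon> > 0"
  shows "\<exists>P N. (\<forall>n. P n \<in> sets M) \<and> disjoint_family_on P {..N::nat} \<and>
       (\<Union>n\<le>N. P n) = UNIV \<and> (\<forall>n. measure M (P n) < \<epsilon>)"
proof -
  interpret prob_space M by (rule PS)
  have spM: "space M = UNIV" using sets_eq_imp_space_eq[OF SB] by simp
  have opn: "open S \<Longrightarrow> S \<in> sets M" for S using SB by simp
  have "\<exists>r>0. measure M (ball x r) < \<epsilon>" for x
  proof -
    define B where "B = (\<lambda>n::nat. ball x (1 / Suc n))"
    have "decseq B" unfolding B_def decseq_def
      by (auto intro!: subset_ball simp: divide_simps)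
    moreover have "range B \<subseteq> sets M" unfolding B_def using opn by auto
    moreover have "(\<Inter>n. B n) = {x}"
    proof
      show "{x} \<subseteq> (\<Inter>n. B n)" unfolding B_def by auto
      show "(\<Inter>n. B n) \<subseteq> {x}"
      proof
        fix y assume y: "y \<in> (\<Inter>n. B n)"
        show "y \<in> {x}"
        proof (rule ccontr)
          assume "y \<notin> {x}"
          then have "0 < dist x y" by simp
          then obtain n where "1 / real (Suc n) < dist x y" using nat_approx_posE by blast
          moreover have "dist x y < 1 / real (Suc n)" using y unfolding B_def by auto
          ultimately show False by simp
        qed
      qed
    qed
    ultimately have "(\<lambda>n. measure M (B n)) \<longlonglongrightarrow> measure M {x}"
      using finite_Lim_measure_decseq[of B] by simp
    then have "(\<lambda>n. measure M (B n)) \<longlonglongrightarrow> 0" using pt by simp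
    then have "eventually (\<lambda>n. measure M (B n) < \<epsilon>) sequentially" using order_tendstoD(2)[OF _ e] by blast
    then obtain n where "measure M (B n) < \<epsilon>" by (auto simp: eventually_sequentially)
    then show ?thesis unfolding B_def by (intro exI[of _ "1 / Suc n"]) auto
  qed
  then have "\<forall>x. \<exists>r. 0 < r \<and> measure M (ball x r) < \<epsilon>" by blast
  then have "\<exists>r. \<forall>x. 0 < r x \<and> measure M (ball x (r x)) < \<epsilon>" by (rule choice)
  then obtain r where r0: "\<forall>x. 0 < r x \<and> measure M (ball x (r x)) < \<epsilon>" by (elim exE)
  then have r: "\<And>x. 0 < r x" "\<And>x. measure M (ball x (r x)) < \<epsilon>" by auto
  define \<F> where "\<F> = range (\<lambda>x. ball x (r x))"
  obtain \<F>' where F': "\<F>' \<subseteq> \<F>" "countable \<F>'" "\<Union>\<F>' = \<Union>\<F>"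
    using Lindelof[of \<F>] unfolding \<F>_def by auto
  have UF: "\<Union>\<F> = UNIV"
  proof -
    have "x \<in> \<Union>\<F>" for x
    proof -
      have "x \<in> ball x (r x)" using r(1)[of x] by simp
      then show ?thesis unfolding \<F>_def by blast
    qed
    then show ?thesis by auto
  qed
  have ne: "\<F>' \<noteq> {}" using F'(3) UF by auto
  define G where "G = from_nat_into \<F>'"
  have rG: "range G = \<F>'" unfolding G_def using range_from_nat_into[OF ne F'(2)] .
  have UG: "(\<Union>n. G n) = UNIV" using rG F'(3) UF by simp
  have Gs: "G n \<in> sets M" "measure M (G n) < \<epsilon>" for n
  proof -
    have "G n \<in> \<F>" using rG F'(1) by auto
    then obtain x where x: "G n = ball x (r x)" unfolding \<F>_def by auto
    show "G n \<in> sets M" "measure M (G n) < \<epsilon>" using x opn r(2) by auto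
  qed
  define U where "U = (\<lambda>N. \<Union>i<N. G i)"
  have Us: "U N \<in> sets M" for N unfolding U_def using Gs by auto
  have Uc: "UNIV - U N \<in> sets M" for N
  proof -
    have "space M - U N \<in> sets M" using Us by auto
    then show ?thesis using spM by simp
  qed
  have L: "(\<lambda>N. measure M (UNIV - U N)) \<longlonglongrightarrow> measure M (\<Inter>N. UNIV - U N)"
  proof (rule finite_Lim_measure_decseq)
    show "range (\<lambda>N. UNIV - U N) \<subseteq> sets M" using Uc by auto
    show "decseq (\<lambda>N. UNIV - U N)" unfolding decseq_def U_def by auto
  qed
  have E: "(\<Inter>N. UNIV - U N) = {}" using UG unfolding U_def by auto
  have "(\<lambda>N. measure M (UNIV - U N)) \<longlonglongrightarrow> 0" using L unfolding E by simp
  then have "eventually (\<lambda>N. measure M (UNIV - U N) < \<epsilon>) sequentially" using order_tendstoD(2)[OF _ e] by blast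
  then obtain N where N: "measure M (UNIV - U N) < \<epsilon>" by (auto simp: eventually_sequentially)
  define P where "P = (\<lambda>n. if n < N then G n - U n else if n = N then UNIV - U N else {})"
  have cover: "(\<Union>n<K. G n - U n) = U K" for K
  proof (induction K)
    case 0 then show ?case by (simp add: U_def)
  next
    case (Suc K)
    have "(\<Union>n<Suc K. G n - U n) = (\<Union>n<K. G n - U n) \<union> (G K - U K)" by (simp add: lessThan_Suc Un_commute)
    also have "\<dots> = U (Suc K)" using Suc by (auto simp: U_def lessThan_Suc)
    finally show ?case .
  qed
  show ?thesis
  proof (intro exI conjI allI)
    fix n show "P n \<in> sets M" unfolding P_def using Gs Us Uc by auto
    show "measure M (P n) < \<epsilon>"
    proof (cases "n < N")
      case True
      then have "measure M (P n) \<le> measure M (G n)" unfolding P_def using Gs Us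
        by (intro finite_measure_mono) auto
      then show ?thesis using Gs(2)[of n] by linarith
    next
      case False
      then show ?thesis unfolding P_def using N e by auto
    qed
  next
    show "disjoint_family_on P {..N}" unfolding disjoint_family_on_def
    proof (intro ballI impI)
      have key: "P m \<inter> P n = {}" if "m < n" "n \<le> N" for m n
      proof -
        have "P m \<subseteq> G m" using that unfolding P_def by auto
        moreover have "G m \<subseteq> U n" using that unfolding U_def by auto
        moreover have "P n \<inter> U n = {}" using that unfolding P_def by auto
        ultimately show ?thesis by auto
      qed
      fix m n assume "m \<in> {..N}" "n \<in> {..N}" "m \<noteq> n"
      then show "P m \<inter> P n = {}" using key[of m n] key[of n m] by (cases "m < n") auto
    qed
  next
    have "(\<Union>n\<le>N. P n) = (\<Union>n<N. G n - U n) \<union> (UNIV - U N)"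
      unfolding P_def atMost_iff by (auto simp: le_less)
    also have "\<dots> = UNIV" using cover[of N] by auto
    finally show "(\<Union>n\<le>N. P n) = UNIV" .
  qed
qed

definition psd :: "nat \<Rightarrow> (nat \<Rightarrow> nat \<Rightarrow> real) \<Rightarrow> bool" where
  "psd n X \<longleftrightarrow> (\<forall>c. 0 \<le> (\<Sum>k<n. \<Sum>l<n. c k * c l * X k l))"

lemma dsum_Suc: "(\<Sum>k<Suc n. \<Sum>l<Suc n. F k l) = (\<Sum>k<n. \<Sum>l<n. F k l) + (\<Sum>k<n. F k n) + (\<Sum>l<n. F n l) + (F n n :: real)"
  by (simp add: sum.distrib)

lemma psd_diag: assumes "psd (Suc n) X" shows "0 \<le> X n n"
proof -
  show ?thesis using spec[OF assms[unfolded psd_def], of "\<lambda>k. if k = n then 1 else 0"] unfolding dsum_Suc by simp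
qed

lemma psd_mono: assumes "psd (Suc n) X" shows "psd n X"
  unfolding psd_def
proof
  fix c
  show "0 \<le> (\<Sum>k<n. \<Sum>l<n. c k * c l * X k l)"
    using spec[OF assms[unfolded psd_def], of "\<lambda>k. if k = n then 0 else c k"] unfolding dsum_Suc by simp
qed

lemma schur:
  "\<And>X. (\<And>k l. X k l = X l k) \<Longrightarrow> (\<And>k l. Y k l = Y l k) \<Longrightarrow> psd n X \<Longrightarrow> psd n Y \<Longrightarrow>
    0 \<le> (\<Sum>k<n. \<Sum>l<n. X k l * Y k l)"
proof (induction n)
  case 0 then show ?case by simp
next
  case (Suc n X)
  have Ynn: "0 \<le> Y n n" using psd_diag[OF Suc.prems(4)] .
  have Xnn: "0 \<le> X n n" using psd_diag[OF Suc.prems(3)] .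
  have main: "0 \<le> (\<Sum>k<Suc n. \<Sum>l<Suc n. X k l * Y k l) + \<epsilon> * Y n n" if "0 < \<epsilon>" for \<epsilon>
  proof -
    define d where "d = X n n + \<epsilon>"
    have d: "0 < d" "X n n \<le> d" using Xnn that by (auto simp: d_def)
    define X' where "X' = (\<lambda>k l. X k l - X k n * X l n / d)"
    have X'sym: "\<And>k l. X' k l = X' l k" unfolding X'_def using Suc.prems(1) by (simp add: mult.commute)
    have X'psd: "psd n X'" unfolding psd_def
    proof
      fix c
      define s where "s = (\<Sum>k<n. c k * X k n)"
      define t where "t = - s / d"
      define c' where "c' = (\<lambda>k. if k = n then t else c k)"
      have "0 \<le> (\<Sum>k<Suc n. \<Sum>l<Suc n. c' k * c' l * X k l)" using spec[OF Suc.prems(3)[unfolded psd_def], of c'] .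
      also have "\<dots> = (\<Sum>k<n. \<Sum>l<n. c k * c l * X k l) + t * s + t * s + t * t * X n n"
      proof -
        have e1: "(\<Sum>k<n. \<Sum>l<n. c' k * c' l * X k l) = (\<Sum>k<n. \<Sum>l<n. c k * c l * X k l)"
          unfolding c'_def by (intro sum.cong refl) auto
        have e2: "(\<Sum>k<n. c' k * c' n * X k n) = t * s"
          unfolding c'_def s_def sum_distrib_left by (intro sum.cong refl) auto
        have e3: "(\<Sum>l<n. c' n * c' l * X n l) = t * s"
          unfolding c'_def s_def sum_distrib_left using Suc.prems(1) by (intro sum.cong refl) auto
        show ?thesis unfolding dsum_Suc e1 e2 e3 by (simp add: c'_def)
      qed
      also have "\<dots> \<le> (\<Sum>k<n. \<Sum>l<n. c k * c l * X k l) - s * s / d"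
      proof -
        have "t * t * X n n \<le> t * t * d" using d by (intro mult_left_mono) auto
        then show ?thesis unfolding t_def using d by (simp add: field_simps)
      qed
      also have "\<dots> = (\<Sum>k<n. \<Sum>l<n. c k * c l * X' k l)"
      proof -
        have "(\<Sum>k<n. \<Sum>l<n. c k * c l * X' k l) = (\<Sum>k<n. \<Sum>l<n. c k * c l * X k l) - (\<Sum>k<n. \<Sum>l<n. (c k * X k n) * (c l * X l n) / d)"
          unfolding X'_def by (simp add: sum_subtractf right_diff_distrib mult.commute mult.left_commute)
        also have "(\<Sum>k<n. \<Sum>l<n. (c k * X k n) * (c l * X l n) / d) = s * s / d"
          unfolding s_def by (simp add: sum_divide_distrib[symmetric] sum_product)
        finally show ?thesis by simp
      qed
      finally show "0 \<le> (\<Sum>k<n. \<Sum>l<n. c k * c l * X' k l)" .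
    qed
    have IH: "0 \<le> (\<Sum>k<n. \<Sum>l<n. X' k l * Y k l)"
      using Suc.IH[OF X'sym Suc.prems(2) X'psd psd_mono[OF Suc.prems(4)]] .
    define c'' where "c'' = (\<lambda>k. if k = n then d else X k n)"
    have Q: "0 \<le> (\<Sum>k<Suc n. \<Sum>l<Suc n. c'' k * c'' l * Y k l)" using spec[OF Suc.prems(4)[unfolded psd_def], of c''] .
    have eQ: "(\<Sum>k<Suc n. \<Sum>l<Suc n. c'' k * c'' l * Y k l) =
       (\<Sum>k<n. \<Sum>l<n. X k n * X l n * Y k l) + d * (\<Sum>k<n. X k n * Y k n) + d * (\<Sum>k<n. X k n * Y k n) + d * d * Y n n"
    proof -
      have e1: "(\<Sum>k<n. \<Sum>l<n. c'' k * c'' l * Y k l) = (\<Sum>k<n. \<Sum>l<n. X k n * X l n * Y k l)"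
        unfolding c''_def by (intro sum.cong refl) auto
      have e2: "(\<Sum>k<n. c'' k * c'' n * Y k n) = d * (\<Sum>k<n. X k n * Y k n)"
        unfolding c''_def sum_distrib_left by (intro sum.cong refl) auto
      have e3: "(\<Sum>l<n. c'' n * c'' l * Y n l) = d * (\<Sum>k<n. X k n * Y k n)"
        unfolding c''_def sum_distrib_left using Suc.prems(2) by (intro sum.cong refl) auto
      show ?thesis unfolding dsum_Suc e1 e2 e3 by (simp add: c''_def)
    qed
    have eS: "(\<Sum>k<Suc n. \<Sum>l<Suc n. X k l * Y k l) + \<epsilon> * Y n n =
       (\<Sum>k<n. \<Sum>l<n. X' k l * Y k l) + (\<Sum>k<n. \<Sum>l<n. X k n * X l n * Y k l) / d + 2 * (\<Sum>k<n. X k n * Y k n) + d * Y n n"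
    proof -
      have a: "(\<Sum>k<n. \<Sum>l<n. X' k l * Y k l) = (\<Sum>k<n. \<Sum>l<n. X k l * Y k l) - (\<Sum>k<n. \<Sum>l<n. X k n * X l n * Y k l) / d"
        unfolding X'_def by (simp add: sum_subtractf left_diff_distrib sum_divide_distrib)
      have b: "(\<Sum>l<n. X n l * Y n l) = (\<Sum>k<n. X k n * Y k n)"
        using Suc.prems(1,2) by (metis (no_types, lifting) sum.cong)
      show ?thesis unfolding dsum_Suc a b d_def by (simp add: algebra_simps)
    qed
    have "0 \<le> (\<Sum>k<n. \<Sum>l<n. X' k l * Y k l) + (\<Sum>k<Suc n. \<Sum>l<Suc n. c'' k * c'' l * Y k l) / d"
      using IH Q d by simp
    also have "\<dots> = (\<Sum>k<Suc n. \<Sum>l<Suc n. X k l * Y k l) + \<epsilon> * Y n n"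
      unfolding eS eQ using d by (simp add: field_simps)
    finally show ?thesis .
  qed
  show ?case
  proof (rule field_le_epsilon)
    fix e :: real assume e: "0 < e"
    define \<epsilon> where "\<epsilon> = e / (Y n n + 1)"
    have "0 < \<epsilon>" using e Ynn by (simp add: \<epsilon>_def)
    have "\<epsilon> * Y n n \<le> e" using e Ynn by (simp add: \<epsilon>_def field_simps)
    then show "0 \<le> (\<Sum>k<Suc n. \<Sum>l<Suc n. X k l * Y k l) + e" using main[OF \<open>0 < \<epsilon>\<close>] by linarith
  qed
qed

locale gr = prob_space M for M :: "'a measure" +
  fixes W :: "'a \<Rightarrow> 'a \<Rightarrow> real" and p :: real
  assumes spM: "space M = UNIV"
  and Wm: "case_prod W \<in> borel_measurable (M \<Otimes>\<^sub>M M)"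
  and Wsym: "W x y = W y x"
  and W0: "0 \<le> W x y" and W1: "W x y \<le> 1"
  and reg: "AE x in M. (\<integral>y. W x y \<partial>M) = p"
  and ld: "U \<in> sets M \<Longrightarrow> p * (measure M U)\<^sup>2 \<le> (LINT z:U \<times> U|M \<Otimes>\<^sub>M M. W (fst z) (snd z))"
  and small: "\<epsilon> > 0 \<Longrightarrow> \<exists>P N. (\<forall>n. P n \<in> sets M) \<and> disjoint_family_on P {..N::nat} \<and>
       (\<Union>n\<le>N. P n) = UNIV \<and> (\<forall>n. measure M (P n) < \<epsilon>)"
begin

sublocale PP: pair_prob_space M M
  by (simp add: pair_prob_space_def pair_sigma_finite_def prob_space_axioms prob_space_imp_sigma_finite)


lemma Wmeas[measurable]:
  assumes "f \<in> measurable N M" "g \<in> measurable N M"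
  shows "(\<lambda>z. W (f z) (g z)) \<in> borel_measurable N"
  using measurable_compose[OF measurable_Pair[OF assms] Wm] by simp

lemma intW: "integrable M (\<lambda>y. W x y)"
  by (rule integrable_const_bound[where B=1]) (auto simp: W0 W1 spM)

lemma p01: "0 \<le> p" "p \<le> 1"
proof -
  have "\<exists>x. (\<integral>y. W x y \<partial>M) = p"
  proof (rule ccontr)
    assume "\<not> ?thesis"
    then have "AE x in M. False" using reg by auto
    then show False by (simp add: AE_False)
  qed
  then obtain x where x: "(\<integral>y. W x y \<partial>M) = p" by blast
  have "0 \<le> (\<integral>y. W x y \<partial>M)" by (intro Bochner_Integration.integral_nonneg W0)
  then show "0 \<le> p" using x by simp
  have "(\<integral>y. W x y \<partial>M) \<le> (\<integral>y. 1 \<partial>M)" by (rule integral_mono) (auto simp: intW W1)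
  then show "p \<le> 1" using x by (simp add: prob_space)
qed

lemma absK: "\<bar>W x y - p\<bar> \<le> 1" using W0[of x y] W1[of x y] p01 by auto

definition bdd :: "('a \<Rightarrow> real) \<Rightarrow> bool" where
  "bdd f \<longleftrightarrow> f \<in> borel_measurable M \<and> (\<exists>C. \<forall>x. \<bar>f x\<bar> \<le> C)"

definition B :: "('a \<Rightarrow> real) \<Rightarrow> ('a \<Rightarrow> real) \<Rightarrow> real" where
  "B f g = (\<integral>z. (W (fst z) (snd z) - p) * f (fst z) * g (snd z) \<partial>(M \<Otimes>\<^sub>M M))"

lemma bdd_add: "bdd f \<Longrightarrow> bdd g \<Longrightarrow> bdd (\<lambda>x. f x + g x)"
  unfolding bdd_def apply auto
  subgoal for C D by (rule exI[of _ "C + D"]) (meson abs_triangle_ineq add_mono order_trans)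
  done

lemma bdd_mult: "bdd f \<Longrightarrow> bdd (\<lambda>x. a * f x)"
  unfolding bdd_def apply auto
  subgoal for C by (rule exI[of _ "\<bar>a\<bar> * C"]) (simp add: abs_mult mult_left_mono)
  done

lemma bdd_const: "bdd (\<lambda>x. a)"
  unfolding bdd_def by auto

lemma bdd_ind: "A \<in> sets M \<Longrightarrow> bdd (indicator A)"
  unfolding bdd_def by (auto intro!: exI[of _ 1] simp: indicator_def)

lemma bdd_sum: "finite I \<Longrightarrow> (\<And>i. i \<in> I \<Longrightarrow> bdd (f i)) \<Longrightarrow> bdd (\<lambda>x. \<Sum>i\<in>I. f i x)"
  by (induction I rule: finite_induct) (auto intro: bdd_add simp: bdd_const)

lemma bdd_simple: "simple_function M f \<Longrightarrow> bdd f"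
proof -
  assume s: "simple_function M f"
  then have fin: "finite (f ` UNIV)" using spM by (simp add: simple_function_def)
  have "\<forall>x. \<bar>f x\<bar> \<le> Max (abs ` f ` UNIV)"
    using fin by (auto intro!: Max_ge)
  then show ?thesis unfolding bdd_def using s borel_measurable_simple_function by blast
qed

lemma intB: assumes "bdd f" "bdd g"
  shows "integrable (M \<Otimes>\<^sub>M M) (\<lambda>z. (W (fst z) (snd z) - p) * f (fst z) * g (snd z))"
proof -
  from assms obtain C D where f[measurable]: "f \<in> borel_measurable M" and g[measurable]: "g \<in> borel_measurable M"
    and C: "\<And>x. \<bar>f x\<bar> \<le> C" and D: "\<And>x. \<bar>g x\<bar> \<le> D" unfolding bdd_def by blast
  show ?thesis
  proof (rule PP.integrable_const_bound[where B="C*D"])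
    show "AE x in M \<Otimes>\<^sub>M M. norm ((W (fst x) (snd x) - p) * f (fst x) * g (snd x)) \<le> C * D"
    proof (rule AE_I2)
      fix z :: "'a \<times> 'a"
      have "\<bar>(W (fst z) (snd z) - p) * f (fst z) * g (snd z)\<bar> \<le> 1 * C * D"
        unfolding abs_mult
        by (intro mult_mono absK C D) (auto intro: order_trans[OF abs_ge_zero C])
      then show "norm ((W (fst z) (snd z) - p) * f (fst z) * g (snd z)) \<le> C * D" by simp
    qed
  qed measurable
qed

lemma B_add1: assumes "bdd f" "bdd f'" "bdd g" shows "B (\<lambda>x. f x + f' x) g = B f g + B f' g"
proof -
  have "B f g + B f' g = (\<integral>z. (W (fst z) (snd z) - p) * f (fst z) * g (snd z) + (W (fst z) (snd z) - p) * f' (fst z) * g (snd z) \<partial>(M \<Otimes>\<^sub>M M))"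
    unfolding B_def using assms by (intro Bochner_Integration.integral_add[symmetric] intB)
  also have "\<dots> = B (\<lambda>x. f x + f' x) g" unfolding B_def by (rule Bochner_Integration.integral_cong) (auto simp: algebra_simps)
  finally show ?thesis ..
qed

lemma B_add2: assumes "bdd f" "bdd g" "bdd g'" shows "B f (\<lambda>x. g x + g' x) = B f g + B f g'"
proof -
  have "B f g + B f g' = (\<integral>z. (W (fst z) (snd z) - p) * f (fst z) * g (snd z) + (W (fst z) (snd z) - p) * f (fst z) * g' (snd z) \<partial>(M \<Otimes>\<^sub>M M))"
    unfolding B_def using assms by (intro Bochner_Integration.integral_add[symmetric] intB)
  also have "\<dots> = B f (\<lambda>x. g x + g' x)" unfolding B_def by (rule Bochner_Integration.integral_cong) (auto simp: algebra_simps)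
  finally show ?thesis ..
qed

lemma B_mult1: "B (\<lambda>x. a * f x) g = a * B f g"
  unfolding B_def by (subst integral_mult_right_zero[symmetric]) (simp add: algebra_simps)

lemma B_mult2: "B f (\<lambda>x. a * g x) = a * B f g"
  unfolding B_def by (subst integral_mult_right_zero[symmetric]) (simp add: algebra_simps)

lemma B_sum1: "finite I \<Longrightarrow> (\<And>i. i \<in> I \<Longrightarrow> bdd (f i)) \<Longrightarrow> bdd g \<Longrightarrow>
   B (\<lambda>x. \<Sum>i\<in>I. f i x) g = (\<Sum>i\<in>I. B (f i) g)"
proof (induction I rule: finite_induct)
  case empty then show ?case by (simp add: B_def)
next
  case (insert a I)
  then show ?case by (simp add: B_add1 bdd_sum)
qed

lemma B_sum2: "finite I \<Longrightarrow> (\<And>i. i \<in> I \<Longrightarrow> bdd (g i)) \<Longrightarrow> bdd f \<Longrightarrow>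
   B f (\<lambda>x. \<Sum>i\<in>I. g i x) = (\<Sum>i\<in>I. B f (g i))"
proof (induction I rule: finite_induct)
  case empty then show ?case by (simp add: B_def)
next
  case (insert a I)
  then show ?case by (simp add: B_add2 bdd_sum)
qed

lemma B_sym: assumes "bdd f" "bdd g" shows "B f g = B g f"
proof -
  have [measurable]: "f \<in> borel_measurable M" "g \<in> borel_measurable M" using assms unfolding bdd_def by auto
  have "B g f = (\<integral>(x,y). (W (fst (y,x)) (snd (y,x)) - p) * g (fst (y,x)) * f (snd (y,x)) \<partial>(M \<Otimes>\<^sub>M M))"
    unfolding B_def by (rule PP.integral_product_swap[symmetric]) measurable
  also have "\<dots> = B f g" unfolding B_def
    by (rule Bochner_Integration.integral_cong) (auto simp: Wsym)
  finally show ?thesis ..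
qed

end

context gr begin

lemma int_ind2: assumes "A \<in> sets M" "A' \<in> sets M"
  shows "integrable (M \<Otimes>\<^sub>M M) (\<lambda>z. indicator A (fst z) * indicator A' (snd z) :: real)"
    "(\<integral>z. indicator A (fst z) * indicator A' (snd z) \<partial>(M \<Otimes>\<^sub>M M)) = measure M A * measure M A'"
  using prod_int[OF prob_space_axioms prob_space_axioms, of "indicator A" "indicator A'" 1 1] assms
  by (auto simp: spM)

lemma B_ind_eq: assumes "A \<in> sets M" "A' \<in> sets M"
  shows "B (indicator A) (indicator A') =
    (\<integral>z. W (fst z) (snd z) * indicator A (fst z) * indicator A' (snd z) \<partial>(M \<Otimes>\<^sub>M M)) - p * (measure M A * measure M A')"
proof -
  have eq: "(\<lambda>z. W (fst z) (snd z) * indicator A (fst z) * indicator A' (snd z) :: real) = (\<lambda>z. (W (fst z) (snd z) - p) * indicator A (fst z) * indicator A' (snd z) + p * (indicator A (fst z) * indicator A' (snd z)))"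
    by (auto simp: fun_eq_iff algebra_simps)
  have i1: "integrable (M \<Otimes>\<^sub>M M) (\<lambda>z. W (fst z) (snd z) * indicator A (fst z) * indicator A' (snd z) :: real)"
    unfolding eq using intB[OF bdd_ind[OF assms(1)] bdd_ind[OF assms(2)]] int_ind2[OF assms]
    by (intro Bochner_Integration.integrable_add integrable_mult_right) auto
  have "B (indicator A) (indicator A') = (\<integral>z. W (fst z) (snd z) * indicator A (fst z) * indicator A' (snd z) - p * (indicator A (fst z) * indicator A' (snd z)) \<partial>(M \<Otimes>\<^sub>M M))"
    unfolding B_def by (rule Bochner_Integration.integral_cong) (auto simp: algebra_simps)
  also have "\<dots> = (\<integral>z. W (fst z) (snd z) * indicator A (fst z) * indicator A' (snd z) \<partial>(M \<Otimes>\<^sub>M M)) - p * (measure M A * measure M A')"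
    using i1 int_ind2[OF assms] by simp
  finally show ?thesis .
qed

lemma B_ind: assumes "E \<in> sets M" shows "0 \<le> B (indicator E) (indicator E)"
proof -
  have "(LINT z:E \<times> E|M \<Otimes>\<^sub>M M. W (fst z) (snd z)) = (\<integral>z. W (fst z) (snd z) * indicator E (fst z) * indicator E (snd z) \<partial>(M \<Otimes>\<^sub>M M))"
    unfolding set_lebesgue_integral_def by (rule Bochner_Integration.integral_cong) (auto simp: indicator_times)
  then show ?thesis using ld[OF assms] B_ind_eq[OF assms assms] by (simp add: power2_eq_square)
qed

lemma B_ind_abs: assumes "C \<in> sets M" shows "\<bar>B (indicator C) (indicator C)\<bar> \<le> (measure M C)\<^sup>2"
proof -
  have "\<bar>B (indicator C) (indicator C)\<bar> \<le> (\<integral>z. norm ((W (fst z) (snd z) - p) * indicator C (fst z) * indicator C (snd z)) \<partial>(M \<Otimes>\<^sub>M M))"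
    unfolding B_def using integral_norm_bound[of "M \<Otimes>\<^sub>M M" "\<lambda>z. (W (fst z) (snd z) - p) * indicator C (fst z) * indicator C (snd z)"] by simp
  also have "\<dots> \<le> (\<integral>z. indicator C (fst z) * indicator C (snd z) \<partial>(M \<Otimes>\<^sub>M M))"
  proof (rule integral_mono)
    show "integrable (M \<Otimes>\<^sub>M M) (\<lambda>z. norm ((W (fst z) (snd z) - p) * indicator C (fst z) * indicator C (snd z)))"
      using intB[OF bdd_ind[OF assms] bdd_ind[OF assms]] by (rule integrable_norm)
    show "integrable (M \<Otimes>\<^sub>M M) (\<lambda>z. indicator C (fst z) * indicator C (snd z) :: real)" using int_ind2[OF assms assms] by simp
    fix z :: "'a \<times> 'a"
    show "norm ((W (fst z) (snd z) - p) * indicator C (fst z) * indicator C (snd z)) \<le> indicator C (fst z) * indicator C (snd z)"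
      using absK[of "fst z" "snd z"] by (simp add: indicator_def abs_mult)
  qed
  also have "\<dots> = (measure M C)\<^sup>2" using int_ind2[OF assms assms] by (simp add: power2_eq_square)
  finally show ?thesis .
qed

lemma B_one1: assumes "bdd h" shows "B h (\<lambda>_. 1) = 0"
proof -
  have [measurable]: "h \<in> borel_measurable M" using assms bdd_def by auto
  have "B h (\<lambda>_. 1) = (\<integral>x. (\<integral>y. (W (fst (x,y)) (snd (x,y)) - p) * h (fst (x,y)) * 1 \<partial>M) \<partial>M)"
    unfolding B_def using PP.integral_fst'[OF intB[OF assms bdd_const[of 1]]] by simp
  also have "\<dots> = (\<integral>x. h x * ((\<integral>y. W x y \<partial>M) - p) \<partial>M)"
  proof (rule Bochner_Integration.integral_cong)
    fix x
    have "(\<integral>y. (W (fst (x,y)) (snd (x,y)) - p) * h (fst (x,y)) * 1 \<partial>M) = (\<integral>y. (W x y - p) \<partial>M) * h x"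
      by simp
    also have "\<dots> = h x * ((\<integral>y. W x y \<partial>M) - p)"
      using intW[of x] by (simp add: prob_space)
    finally show "(\<integral>y. (W (fst (x,y)) (snd (x,y)) - p) * h (fst (x,y)) * 1 \<partial>M) = h x * ((\<integral>y. W x y \<partial>M) - p)" .
  qed simp
  also have "\<dots> = (\<integral>x. 0 \<partial>M)"
    by (rule integral_cong_AE) (use reg in auto)
  finally show ?thesis by simp
qed

lemma B_one2: assumes "bdd h" shows "B (\<lambda>_. 1) h = 0"
  using B_sym[OF bdd_const assms] B_one1[OF assms] by simp

end

context gr begin

lemma frac_aux:
  assumes "finite I"
  shows "\<And>E. (\<forall>i\<in>I. C i \<in> sets M) \<Longrightarrow> disjoint_family_on C I \<Longrightarrow> E \<in> sets M \<Longrightarrow>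
    (\<forall>i\<in>I. E \<inter> C i = {}) \<Longrightarrow> (\<forall>i\<in>I. 0 \<le> v i \<and> v i \<le> 1) \<Longrightarrow>
    - (\<Sum>i\<in>I. (measure M (C i))\<^sup>2) \<le>
      B (\<lambda>x. indicator E x + (\<Sum>i\<in>I. v i * indicator (C i) x)) (\<lambda>x. indicator E x + (\<Sum>i\<in>I. v i * indicator (C i) x))"
  using assms
proof (induction I rule: finite_induct)
  case empty
  then show ?case using B_ind[of E] by simp
next
  case (insert a I E)
  define s where "s = (\<Sum>i\<in>I. (measure M (C i))\<^sup>2)"
  define h0 where "h0 = (\<lambda>x. indicator E x + (\<Sum>i\<in>I. v i * indicator (C i) x))"
  define c where "c = (indicator (C a) :: 'a \<Rightarrow> real)"
  have Ca: "C a \<in> sets M" using insert by auto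
  have dI: "disjoint_family_on C I" using insert.prems(2) disjoint_family_on_mono by blast
  have IH0: "- s \<le> B h0 h0" unfolding s_def h0_def
    using insert.IH[of E] insert.prems dI by auto
  have disj: "\<forall>i\<in>I. (E \<union> C a) \<inter> C i = {}"
    using insert.prems(2,4) insert.hyps(2) unfolding disjoint_family_on_def by auto
  have IH1: "- s \<le> B (\<lambda>x. indicator (E \<union> C a) x + (\<Sum>i\<in>I. v i * indicator (C i) x)) (\<lambda>x. indicator (E \<union> C a) x + (\<Sum>i\<in>I. v i * indicator (C i) x))"
    unfolding s_def using insert.IH[of "E \<union> C a"] insert.prems dI disj Ca by auto
  have EC: "E \<inter> C a = {}" using insert.prems(4) by auto
  have h1: "(\<lambda>x. indicator (E \<union> C a) x + (\<Sum>i\<in>I. v i * indicator (C i) x)) = (\<lambda>x. h0 x + c x)"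
    unfolding h0_def c_def by (auto simp: fun_eq_iff indicator_disj_union[OF EC])
  define v0 where "v0 = v a"
  have v0: "0 \<le> v0" "v0 \<le> 1" using insert.prems(5) v0_def by auto
  have h: "(\<lambda>x. indicator E x + (\<Sum>i\<in>insert a I. v i * indicator (C i) x)) = (\<lambda>x. h0 x + v0 * c x)"
    unfolding h0_def c_def v0_def by (intro ext, simp only: sum.insert[OF insert.hyps(1,2)])
  have bh0: "bdd h0" unfolding h0_def using insert.prems insert.hyps
    by (intro bdd_add bdd_ind bdd_sum bdd_mult) auto
  have bc: "bdd c" unfolding c_def using Ca by (rule bdd_ind)
  have bvc: "bdd (\<lambda>x. v0 * c x)" using bc by (rule bdd_mult)
  have e1: "B (\<lambda>x. h0 x + c x) (\<lambda>x. h0 x + c x) = B h0 h0 + B h0 c + B c h0 + B c c"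
    using bh0 bc by (simp add: B_add1 B_add2 bdd_add)
  have e2: "B (\<lambda>x. h0 x + v0 * c x) (\<lambda>x. h0 x + v0 * c x) = B h0 h0 + v0 * B h0 c + v0 * B c h0 + v0 * v0 * B c c"
    using bh0 bc bvc by (simp add: B_add1 B_add2 bdd_add B_mult1 B_mult2 algebra_simps)
  have bcc: "\<bar>B c c\<bar> \<le> (measure M (C a))\<^sup>2" unfolding c_def by (rule B_ind_abs[OF Ca])
  have key: "B (\<lambda>x. h0 x + v0 * c x) (\<lambda>x. h0 x + v0 * c x) =
     v0 * B (\<lambda>x. h0 x + c x) (\<lambda>x. h0 x + c x) + (1 - v0) * B h0 h0 - (v0 - v0 * v0) * B c c"
    unfolding e1 e2 by (simp add: algebra_simps)
  have t1: "v0 * (- s) + (1 - v0) * (- s) \<le> v0 * B (\<lambda>x. h0 x + c x) (\<lambda>x. h0 x + c x) + (1 - v0) * B h0 h0"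
    using IH1 IH0 v0 unfolding h1 by (intro add_mono mult_left_mono) auto
  have "v0 * v0 \<le> v0 * 1" using v0 by (intro mult_left_mono) auto
  moreover have "0 \<le> v0 * v0" by simp
  ultimately have vv: "0 \<le> v0 - v0 * v0" "v0 - v0 * v0 \<le> 1" using v0 by linarith+
  have t2: "(v0 - v0 * v0) * B c c \<le> (measure M (C a))\<^sup>2"
  proof -
    have "(v0 - v0 * v0) * B c c \<le> (v0 - v0 * v0) * \<bar>B c c\<bar>" using vv by (intro mult_left_mono) auto
    also have "\<dots> \<le> 1 * (measure M (C a))\<^sup>2" using vv bcc by (intro mult_mono) auto
    finally show ?thesis by simp
  qed
  have "- (s + (measure M (C a))\<^sup>2) \<le> B (\<lambda>x. h0 x + v0 * c x) (\<lambda>x. h0 x + v0 * c x)"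
    using key t1 t2 by (simp add: algebra_simps)
  then show ?case unfolding h s_def using insert.hyps by (simp add: add.commute)
qed


lemma simple01:
  assumes sg: "simple_function M g" and g01: "\<And>x. 0 \<le> g x" "\<And>x. g x \<le> 1"
  shows "0 \<le> B g g"
proof (rule field_le_epsilon)
  fix \<epsilon> :: real assume "0 < \<epsilon>"
  from small[OF this] obtain P N where PN: "(\<forall>n. P n \<in> sets M) \<and> disjoint_family_on P {..N::nat} \<and>
       (\<Union>n\<le>N. P n) = UNIV \<and> (\<forall>n. measure M (P n) < \<epsilon>)" by meson
  then have P: "\<And>n. P n \<in> sets M" "disjoint_family_on P {..N}"
    "(\<Union>n\<le>N. P n) = UNIV" "\<And>n. measure M (P n) < \<epsilon>" by simp_all
  define I where "I = g ` UNIV \<times> {..N}"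
  define C where "C = (\<lambda>(v, n). g -` {v} \<inter> P n)"
  have finI: "finite I" unfolding I_def using sg spM by (simp add: simple_function_def)
  have CM: "\<forall>i\<in>I. C i \<in> sets M"
  proof
    fix i assume "i \<in> I"
    then obtain v n where i: "i = (v, n)" "v \<in> g ` UNIV" by (auto simp: I_def)
    have "g -` {v} \<inter> space M \<in> sets M" using sg i spM by (auto simp: simple_function_def)
    then show "C i \<in> sets M" using P(1)[of n] i spM by (auto simp: C_def)
  qed
  have disj: "disjoint_family_on C I"
    unfolding disjoint_family_on_def
  proof (intro ballI impI)
    fix i j assume "i \<in> I" "j \<in> I" "i \<noteq> j"
    then obtain v n v' n' where ij: "i = (v, n)" "j = (v', n')" "n \<le> N" "n' \<le> N" by (auto simp: I_def)
    show "C i \<inter> C j = {}"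
    proof (cases "v = v'")
      case True
      then have "n \<noteq> n'" using ij \<open>i \<noteq> j\<close> by auto
      then have "P n \<inter> P n' = {}" using P(2) ij unfolding disjoint_family_on_def by auto
      then show ?thesis using ij by (auto simp: C_def)
    next
      case False
      then show ?thesis using ij by (auto simp: C_def)
    qed
  qed
  have geq: "g = (\<lambda>x. indicator {} x + (\<Sum>i\<in>I. fst i * indicator (C i) x))"
  proof
    fix x
    obtain n0 where n0: "n0 \<le> N" "x \<in> P n0" using P(3) by blast
    define i0 where "i0 = (g x, n0)"
    have i0I: "i0 \<in> I" using n0 by (auto simp: I_def i0_def)
    have "(\<Sum>i\<in>I. fst i * indicator (C i) x) = fst i0 * indicator (C i0) x + (\<Sum>i\<in>I - {i0}. fst i * indicator (C i) x)"
      using finI i0I by (rule sum.remove)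
    also have "(\<Sum>i\<in>I - {i0}. fst i * indicator (C i) x) = 0"
    proof (rule sum.neutral, rule ballI)
      fix i assume "i \<in> I - {i0}"
      then have "C i \<inter> C i0 = {}" using disj i0I unfolding disjoint_family_on_def by auto
      moreover have "x \<in> C i0" using n0 by (auto simp: C_def i0_def)
      ultimately show "fst i * indicator (C i) x = 0" by (auto simp: indicator_def)
    qed
    also have "fst i0 * indicator (C i0) x = g x" using n0 by (auto simp: C_def i0_def)
    finally show "g x = indicator {} x + (\<Sum>i\<in>I. fst i * indicator (C i) x)" by simp
  qed
  have v01: "\<forall>i\<in>I. 0 \<le> fst i \<and> fst i \<le> 1" using g01 by (auto simp: I_def)
  have "- (\<Sum>i\<in>I. (measure M (C i))\<^sup>2) \<le> B (\<lambda>x. indicator {} x + (\<Sum>i\<in>I. fst i * indicator (C i) x)) (\<lambda>x. indicator {} x + (\<Sum>i\<in>I. fst i * indicator (C i) x))"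
    by (rule frac_aux[OF finI]) (use CM disj v01 in auto)
  then have "- (\<Sum>i\<in>I. (measure M (C i))\<^sup>2) \<le> B g g" by (simp only: geq[symmetric])
  moreover have "(\<Sum>i\<in>I. (measure M (C i))\<^sup>2) \<le> \<epsilon>"
  proof -
    have "(\<Sum>i\<in>I. (measure M (C i))\<^sup>2) \<le> (\<Sum>i\<in>I. \<epsilon> * measure M (C i))"
    proof (rule sum_mono)
      fix i assume "i \<in> I"
      then obtain v n where i: "i = (v, n)" by (auto simp: I_def)
      have "measure M (C i) \<le> measure M (P n)" using P(1)[of n] i by (intro finite_measure_mono) (auto simp: C_def)
      then have "measure M (C i) \<le> \<epsilon>" using P(4)[of n] by linarith
      then show "(measure M (C i))\<^sup>2 \<le> \<epsilon> * measure M (C i)"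
        by (simp add: power2_eq_square mult_right_mono)
    qed
    also have "\<dots> = \<epsilon> * measure M (\<Union>i\<in>I. C i)"
    proof -
      have "C ` I \<subseteq> sets M" using CM by auto
      then show ?thesis using finite_measure_finite_Union[OF finI _ disj] by (simp add: sum_distrib_left)
    qed
    also have "\<dots> \<le> \<epsilon> * 1" using \<open>0 < \<epsilon>\<close> by (intro mult_left_mono) (auto simp: prob_le_1)
    finally show ?thesis by simp
  qed
  ultimately show "0 \<le> B g g + \<epsilon>" by linarith
qed

lemma psd_simple: assumes sf: "simple_function M f" shows "0 \<le> B f f"
proof -
  obtain C where C: "\<And>x. \<bar>f x\<bar> \<le> C" using bdd_simple[OF sf] bdd_def by blast
  define D where "D = \<bar>C\<bar> + 1"
  have D: "0 < D" "\<And>x. \<bar>f x\<bar> \<le> D - 1" unfolding D_def using C by (auto intro: order_trans[OF _ abs_ge_self])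
  define g where "g = (\<lambda>x. (f x + D) / (2 * D))"
  have sg: "simple_function M g" unfolding g_def by (rule simple_function_compose1[OF sf])
  have g01: "\<And>x. 0 \<le> g x" "\<And>x. g x \<le> 1" unfolding g_def using D
    by (auto simp: abs_le_iff divide_simps) (smt (verit) D(2) abs_le_iff)+
  have bg: "bdd g" by (rule bdd_simple[OF sg])
  define a where "a = (\<lambda>x. (2 * D) * g x)"
  define b where "b = (\<lambda>x::'a. (- D) * 1)"
  have feq: "f = (\<lambda>x. a x + b x)"
    unfolding a_def b_def g_def using D by (auto simp: fun_eq_iff field_simps)
  have ba: "bdd a" unfolding a_def using bg by (rule bdd_mult)
  have bb: "bdd b" unfolding b_def by (rule bdd_const)
  have bab: "bdd (\<lambda>x. a x + b x)" using ba bb by (rule bdd_add)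
  have "B f f = B a (\<lambda>x. a x + b x) + B b (\<lambda>x. a x + b x)"
    unfolding feq using ba bb bab by (rule B_add1)
  also have "\<dots> = B a a + B a b + (B b a + B b b)"
    using ba bb by (simp add: B_add2)
  also have "B a b = 0" unfolding b_def B_mult2 using B_one1[OF ba] by simp
  also have "B b a = 0" unfolding b_def B_mult1 using B_one2[OF ba] by simp
  also have "B b b = 0" unfolding b_def B_mult1 using B_one2[OF bdd_const] by simp
  also have "B a a = (2 * D) * (2 * D) * B g g" unfolding a_def B_mult1 B_mult2 by simp
  finally have "B f f = (2 * D) * (2 * D) * B g g" by simp
  then show ?thesis using simple01[OF sg g01] D by simp
qed

end

context gr begin
lemma "0 < (\<epsilon>::real) \<Longrightarrow> True"
proof -
  assume e: "0 < \<epsilon>"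
  obtain P N where PN: "(\<forall>n. P n \<in> sets M) \<and> disjoint_family_on P {..N::nat} \<and>
       (\<Union>n\<le>N. P n) = UNIV \<and> (\<forall>n. measure M (P n) < \<epsilon>)" using small[OF e] by meson
  show True by simp
qed
end

context gr begin

inductive rs :: "('a \<times> 'a \<Rightarrow> real) \<Rightarrow> bool" where
  rs0: "rs (\<lambda>_. 0)"
| rsS: "A \<in> sets M \<Longrightarrow> A' \<in> sets M \<Longrightarrow> rs F \<Longrightarrow> rs (\<lambda>u. F u + c * indicator A (fst u) * indicator A' (snd u))"

lemma rs_add: "rs G \<Longrightarrow> rs F \<Longrightarrow> rs (\<lambda>u. F u + G u)"
proof (induction G rule: rs.induct)
  case rs0 then show ?case by simp
next
  case (rsS A A' G c)
  then have "rs (\<lambda>u. (F u + G u) + c * indicator A (fst u) * indicator A' (snd u))" by (intro rs.rsS) auto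
  then show ?case by (simp add: add.assoc)
qed

lemma rs_scale: "rs F \<Longrightarrow> rs (\<lambda>u. a * F u)"
proof (induction F rule: rs.induct)
  case rs0 then show ?case by (simp add: rs.rs0)
next
  case (rsS A A' F c)
  then have "rs (\<lambda>u. a * F u + (a * c) * indicator A (fst u) * indicator A' (snd u))" by (intro rs.rsS) auto
  then show ?case by (simp add: algebra_simps)
qed

lemma rs_rect: "A \<in> sets M \<Longrightarrow> A' \<in> sets M \<Longrightarrow> rs (\<lambda>u. c * indicator A (fst u) * indicator A' (snd u))"
  using rs.rsS[OF _ _ rs.rs0, of A A' c] by simp

lemma rs_one: "rs (\<lambda>u. 1)"
proof -
  have "rs (\<lambda>u. 1 * indicator UNIV (fst u) * indicator UNIV (snd u))"
    by (rule rs_rect) (metis sets.top spM)+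
  then show ?thesis by simp
qed

lemma rs_sum: "(\<And>i. i < (N::nat) \<Longrightarrow> rs (F i)) \<Longrightarrow> rs (\<lambda>u. \<Sum>i<N. F i u)"
proof (induction N)
  case 0 then show ?case by (simp add: rs.rs0)
next
  case (Suc N)
  have "rs (\<lambda>u. (\<Sum>i<N. F i u) + F N u)" by (rule rs_add) (use Suc in auto)
  then show ?case by simp
qed

lemma rs_repr: "rs F \<Longrightarrow> \<exists>(n::nat) c A A'. (\<forall>k. A k \<in> sets M \<and> A' k \<in> sets M) \<and>
   F = (\<lambda>u. \<Sum>k<n. c k * indicator (A k) (fst u) * indicator (A' k) (snd u))"
proof (induction F rule: rs.induct)
  case rs0 then show ?case by (rule exI[of _ 0], rule exI[of _ "\<lambda>_. 0"], rule exI[of _ "\<lambda>_. {}"], rule exI[of _ "\<lambda>_. {}"]) simp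
next
  case (rsS A0 A0' F c0)
  from rsS.IH show ?case
  proof (elim exE conjE)
    fix n :: nat and c A A'
    assume h1: "\<forall>k. A k \<in> sets M \<and> A' k \<in> sets M"
      and h2: "F = (\<lambda>u. \<Sum>k<n. c k * indicator (A k) (fst u) * indicator (A' k) (snd u))"
    show ?case
    proof (intro exI conjI)
      show "\<forall>k. (A(n := A0)) k \<in> sets M \<and> (A'(n := A0')) k \<in> sets M" using h1 rsS by auto
      show "(\<lambda>u. F u + c0 * indicator A0 (fst u) * indicator A0' (snd u)) =
        (\<lambda>u. \<Sum>k<Suc n. (c(n := c0)) k * indicator ((A(n := A0)) k) (fst u) * indicator ((A'(n := A0')) k) (snd u))"
        unfolding h2 by (auto simp: fun_eq_iff intro!: sum.cong)
    qed
  qed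
qed

lemma rs_bdd: "rs F \<Longrightarrow> F \<in> borel_measurable (M \<Otimes>\<^sub>M M) \<and> (\<exists>C. \<forall>u. \<bar>F u\<bar> \<le> C)"
proof (induction F rule: rs.induct)
  case rs0 then show ?case by auto
next
  case (rsS A A' F c)
  then obtain C where C: "\<forall>u. \<bar>F u\<bar> \<le> C" by blast
  have "\<forall>u. \<bar>F u + c * indicator A (fst u) * indicator A' (snd u)\<bar> \<le> C + \<bar>c\<bar>"
  proof
    fix u
    have "\<bar>c * indicator A (fst u) * indicator A' (snd u)\<bar> \<le> \<bar>c\<bar>" by (auto simp: indicator_def)
    then show "\<bar>F u + c * indicator A (fst u) * indicator A' (snd u)\<bar> \<le> C + \<bar>c\<bar>" using C[rule_format, of u] by linarith
  qed
  then show ?case using rsS by auto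
qed

lemma int_bdd2: "f \<in> borel_measurable (M \<Otimes>\<^sub>M M) \<Longrightarrow> (\<And>u. \<bar>f u\<bar> \<le> (C::real)) \<Longrightarrow> integrable (M \<Otimes>\<^sub>M M) f"
  by (rule PP.integrable_const_bound[where B=C]) auto

definition approxV :: "('a \<times> 'a) set \<Rightarrow> bool" where
  "approxV V \<longleftrightarrow> (\<forall>\<delta>>0. \<exists>F. rs F \<and> (\<integral>u. \<bar>indicator V u - F u\<bar> \<partial>(M \<Otimes>\<^sub>M M)) < \<delta>)"

lemma int_err: assumes "V \<in> sets (M \<Otimes>\<^sub>M M)" "rs F"
  shows "integrable (M \<Otimes>\<^sub>M M) (\<lambda>u. \<bar>indicator V u - F u\<bar>)"
proof -
  obtain C where [measurable]: "F \<in> borel_measurable (M \<Otimes>\<^sub>M M)" and C: "\<And>u. \<bar>F u\<bar> \<le> C" using rs_bdd[OF assms(2)] by blast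
  show ?thesis
  proof (rule int_bdd2[where C="1 + C"])
    show "(\<lambda>u. \<bar>indicator V u - F u\<bar>) \<in> borel_measurable (M \<Otimes>\<^sub>M M)" using assms(1) by measurable
    fix u show "\<bar>\<bar>indicator V u - F u\<bar>\<bar> \<le> 1 + C" using C[of u] by (auto simp: indicator_def)
  qed
qed

end

context gr begin

lemma approxV_all: assumes V: "V \<in> sets (M \<Otimes>\<^sub>M M)" shows "approxV V"
proof -
  let ?G = "{a \<times> b |a b. a \<in> sets M \<and> b \<in> sets M}"
  have Vs: "V \<in> sigma_sets (space M \<times> space M) ?G" using V sets_pair_measure by blast
  have G: "?G \<subseteq> Pow (space M \<times> space M)" using sets.sets_into_space by blast
  have SS: "sigma_sets (space M \<times> space M) ?G = sets (M \<Otimes>\<^sub>M M)" using sets_pair_measure by metis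
  from Int_stable_pair_measure_generator G Vs show "approxV V"
  proof (induction rule: sigma_sets_induct_disjoint)
    case (basic A)
    then obtain a b where ab: "A = a \<times> b" "a \<in> sets M" "b \<in> sets M" by blast
    show ?case unfolding approxV_def
    proof (intro allI impI)
      fix \<delta> :: real assume "0 < \<delta>"
      have "rs (\<lambda>u. 1 * indicator a (fst u) * indicator b (snd u))" using ab by (intro rs_rect)
      moreover have "(\<integral>u. \<bar>indicator A u - 1 * indicator a (fst u) * indicator b (snd u) :: real\<bar> \<partial>(M \<Otimes>\<^sub>M M)) = 0"
        unfolding ab indicator_times by simp
      ultimately show "\<exists>F. rs F \<and> (\<integral>u. \<bar>indicator A u - F u\<bar> \<partial>(M \<Otimes>\<^sub>M M)) < \<delta>" using \<open>0 < \<delta>\<close> by auto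
    qed
  next
    case empty
    show ?case unfolding approxV_def using rs.rs0 by auto
  next
    case (compl A)
    have AM: "A \<in> sets (M \<Otimes>\<^sub>M M)" using compl SS by auto
    show ?case unfolding approxV_def
    proof (intro allI impI)
      fix \<delta> :: real assume "0 < \<delta>"
      then obtain F where F: "rs F" "(\<integral>u. \<bar>indicator A u - F u\<bar> \<partial>(M \<Otimes>\<^sub>M M)) < \<delta>"
        using compl(2) unfolding approxV_def by blast
      have "rs (\<lambda>u. 1 + (-1) * F u)" by (rule rs_add[OF rs_scale[OF F(1)] rs_one])
      moreover have "(\<integral>u. \<bar>indicator (space M \<times> space M - A) u - (1 + (-1) * F u)\<bar> \<partial>(M \<Otimes>\<^sub>M M)) =
          (\<integral>u. \<bar>indicator A u - F u\<bar> \<partial>(M \<Otimes>\<^sub>M M))"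
        by (rule Bochner_Integration.integral_cong) (auto simp: spM indicator_def)
      ultimately show "\<exists>F. rs F \<and> (\<integral>u. \<bar>indicator (space M \<times> space M - A) u - F u\<bar> \<partial>(M \<Otimes>\<^sub>M M)) < \<delta>"
        using F(2) by auto
    qed
  next
    case (union A)
    have AM: "\<And>i. A i \<in> sets (M \<Otimes>\<^sub>M M)" using union SS by auto
    define V where "V = (\<Union>i. A i)"
    have VM: "V \<in> sets (M \<Otimes>\<^sub>M M)" using AM V_def by auto
    define D where "D = (\<lambda>N. V - (\<Union>i<N. A i))"
    have DM: "\<And>N. D N \<in> sets (M \<Otimes>\<^sub>M M)" unfolding D_def using AM VM by auto
    have "decseq D" unfolding D_def decseq_def by auto
    moreover have "(\<Inter>N. D N) = {}" unfolding D_def V_def by auto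
    ultimately have lim: "(\<lambda>N. measure (M \<Otimes>\<^sub>M M) (D N)) \<longlonglongrightarrow> 0"
      using PP.finite_Lim_measure_decseq[of D] DM by auto
    show ?case unfolding approxV_def V_def[symmetric]
    proof (intro allI impI)
      fix \<delta> :: real assume d: "0 < \<delta>"
      then have "eventually (\<lambda>N. measure (M \<Otimes>\<^sub>M M) (D N) < \<delta> / 2) sequentially"
        using order_tendstoD(2)[OF lim, of "\<delta> / 2"] by simp
      then obtain N where N: "measure (M \<Otimes>\<^sub>M M) (D N) < \<delta> / 2"
        by (auto simp: eventually_sequentially)
      define e where "e = \<delta> / (2 * (real N + 1))"
      have e: "0 < e" using d by (simp add: e_def)
      have "\<forall>i. \<exists>F. rs F \<and> (\<integral>u. \<bar>indicator (A i) u - F u\<bar> \<partial>(M \<Otimes>\<^sub>M M)) < e"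
        using union(3) e unfolding approxV_def by blast
      then obtain Fs where Fs: "\<And>i. rs (Fs i)" "\<And>i. (\<integral>u. \<bar>indicator (A i) u - Fs i u\<bar> \<partial>(M \<Otimes>\<^sub>M M)) < e"
        by metis
      define F where "F = (\<lambda>u. \<Sum>i<N. Fs i u)"
      have rF: "rs F" unfolding F_def using Fs(1) by (intro rs_sum)
      have ptw: "indicator V u = indicator (D N) u + (\<Sum>i<N. indicator (A i) u :: real)" for u :: "'a \<times> 'a"
      proof (cases "u \<in> V")
        case False
        then show ?thesis unfolding D_def V_def by auto
      next
        case True
        then obtain j where j: "u \<in> A j" unfolding V_def by auto
        have oth: "\<And>i. i \<noteq> j \<Longrightarrow> u \<notin> A i" using union(1) j unfolding disjoint_family_on_def by blast
        have "(\<Sum>i<N. indicator (A i) u :: real) = (\<Sum>i<N. if i = j then 1 else 0)"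
          by (rule sum.cong) (auto simp: j oth)
        also have "\<dots> = (if j < N then 1 else 0)" by simp
        finally show ?thesis using True j oth unfolding D_def by (auto simp: indicator_def)
      qed
      have ineq: "\<bar>indicator V u - F u\<bar> \<le> indicator (D N) u + (\<Sum>i<N. \<bar>indicator (A i) u - Fs i u\<bar>)" for u
      proof -
        have "indicator V u - F u = indicator (D N) u + (\<Sum>i<N. indicator (A i) u - Fs i u)"
          unfolding ptw F_def by (simp add: sum_subtractf)
        then have "\<bar>indicator V u - F u\<bar> \<le> \<bar>indicator (D N) u\<bar> + \<bar>\<Sum>i<N. indicator (A i) u - Fs i u\<bar>" by linarith
        also have "\<dots> \<le> indicator (D N) u + (\<Sum>i<N. \<bar>indicator (A i) u - Fs i u\<bar>)"
          by (intro add_mono sum_abs) auto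
        finally show ?thesis .
      qed
      have iD: "integrable (M \<Otimes>\<^sub>M M) (indicator (D N) :: _ \<Rightarrow> real)"
        using DM[of N] by (intro int_bdd2[where C=1]) (auto simp: indicator_def)
      have iS: "integrable (M \<Otimes>\<^sub>M M) (\<lambda>u. \<Sum>i<N. \<bar>indicator (A i) u - Fs i u\<bar>)"
        using int_err[OF AM Fs(1)] by (intro Bochner_Integration.integrable_sum) auto
      have "(\<integral>u. \<bar>indicator V u - F u\<bar> \<partial>(M \<Otimes>\<^sub>M M)) \<le>
          (\<integral>u. indicator (D N) u + (\<Sum>i<N. \<bar>indicator (A i) u - Fs i u\<bar>) \<partial>(M \<Otimes>\<^sub>M M))"
        using int_err[OF VM rF] iD iS ineq by (intro integral_mono) auto
      also have "\<dots> = measure (M \<Otimes>\<^sub>M M) (D N) + (\<Sum>i<N. (\<integral>u. \<bar>indicator (A i) u - Fs i u\<bar> \<partial>(M \<Otimes>\<^sub>M M)))"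
        using iD iS int_err[OF AM Fs(1)] DM
        by (simp add: Bochner_Integration.integral_add Bochner_Integration.integral_sum)
      also have "\<dots> < \<delta> / 2 + real N * e"
      proof -
        have "(\<Sum>i<N. (\<integral>u. \<bar>indicator (A i) u - Fs i u\<bar> \<partial>(M \<Otimes>\<^sub>M M))) \<le> (\<Sum>i<N. e)"
          using Fs(2) by (intro sum_mono) (auto intro: less_imp_le)
        then show ?thesis using N by simp
      qed
      also have "\<dots> \<le> \<delta>"
      proof -
        have "real N * e = \<delta> / 2 * (real N / (real N + 1))" unfolding e_def by (simp add: field_simps)
        also have "\<dots> \<le> \<delta> / 2 * 1" using d by (intro mult_left_mono) auto
        finally show ?thesis by simp
      qed
      finally show "\<exists>F. rs F \<and> (\<integral>u. \<bar>indicator V u - F u\<bar> \<partial>(M \<Otimes>\<^sub>M M)) < \<delta>" using rF by auto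
    qed
  qed
qed

end

context gr begin

sublocale PP2: pair_prob_space "M \<Otimes>\<^sub>M M" "M \<Otimes>\<^sub>M M"
  using prob_space_pair[OF prob_space_axioms prob_space_axioms]
  by (simp add: pair_prob_space_def pair_sigma_finite_def prob_space_imp_sigma_finite)

lemma int_bdd4: "f \<in> borel_measurable ((M \<Otimes>\<^sub>M M) \<Otimes>\<^sub>M (M \<Otimes>\<^sub>M M)) \<Longrightarrow> (\<And>u. \<bar>f u\<bar> \<le> (C::real)) \<Longrightarrow>
   integrable ((M \<Otimes>\<^sub>M M) \<Otimes>\<^sub>M (M \<Otimes>\<^sub>M M)) f"
  by (rule PP2.integrable_const_bound[where B=C]) auto

lemma int_bdd1: "f \<in> borel_measurable M \<Longrightarrow> (\<And>u. \<bar>f u\<bar> \<le> (C::real)) \<Longrightarrow> integrable M f"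
  by (rule integrable_const_bound[where B=C]) auto

lemma int_abs_le1: fixes f :: "'a \<Rightarrow> real" assumes "f \<in> borel_measurable M" "\<And>u. \<bar>f u\<bar> \<le> 1" shows "\<bar>integral\<^sup>L M f\<bar> \<le> 1"
proof -
  have "\<bar>integral\<^sup>L M f\<bar> \<le> (\<integral>x. norm (f x) \<partial>M)" using integral_norm_bound[of M f] by simp
  also have "\<dots> \<le> (\<integral>x. 1 \<partial>M)"
    using assms by (intro integral_mono int_bdd1[where C=1]) auto
  finally show ?thesis by (simp add: prob_space)
qed

lemma fubini4:
  fixes f g :: "'a \<Rightarrow> 'a \<Rightarrow> real"
  assumes [measurable]: "case_prod f \<in> borel_measurable (M \<Otimes>\<^sub>M M)" "case_prod g \<in> borel_measurable (M \<Otimes>\<^sub>M M)"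
    and bf: "\<And>x y. \<bar>f x y\<bar> \<le> 1" and bg: "\<And>x y. \<bar>g x y\<bar> \<le> 1"
  shows "(\<integral>Z. f (fst (fst Z)) (fst (snd Z)) * g (snd (fst Z)) (snd (snd Z)) \<partial>((M \<Otimes>\<^sub>M M) \<Otimes>\<^sub>M (M \<Otimes>\<^sub>M M))) =
    (\<integral>z. f (fst z) (snd z) \<partial>(M \<Otimes>\<^sub>M M)) * (\<integral>z. g (fst z) (snd z) \<partial>(M \<Otimes>\<^sub>M M))"
proof -
  have mf[measurable]: "(\<lambda>z. f (h1 z) (h2 z)) \<in> borel_measurable N" if "h1 \<in> measurable N M" "h2 \<in> measurable N M" for N h1 h2
    using measurable_compose[OF measurable_Pair[OF that] assms(1)] by simp
  have mg[measurable]: "(\<lambda>z. g (h1 z) (h2 z)) \<in> borel_measurable N" if "h1 \<in> measurable N M" "h2 \<in> measurable N M" for N h1 h2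
    using measurable_compose[OF measurable_Pair[OF that] assms(2)] by simp
  have sec: "(\<lambda>y. f x y) \<in> borel_measurable M" "(\<lambda>y. g x y) \<in> borel_measurable M" for x
  proof -
    have c1: "(\<lambda>_::'a. x) \<in> measurable M M" by (rule measurable_const, simp add: spM)
    have c2: "(\<lambda>y::'a. y) \<in> measurable M M" by measurable
    show "(\<lambda>y. f x y) \<in> borel_measurable M" "(\<lambda>y. g x y) \<in> borel_measurable M"
      using mf[OF c1 c2] mg[OF c1 c2] by simp_all
  qed
  have int: "integrable ((M \<Otimes>\<^sub>M M) \<Otimes>\<^sub>M (M \<Otimes>\<^sub>M M)) (\<lambda>Z. f (fst (fst Z)) (fst (snd Z)) * g (snd (fst Z)) (snd (snd Z)))"
  proof (rule int_bdd4[where C=1])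
    fix Z :: "('a \<times> 'a) \<times> ('a \<times> 'a)"
    show "\<bar>f (fst (fst Z)) (fst (snd Z)) * g (snd (fst Z)) (snd (snd Z))\<bar> \<le> 1"
      unfolding abs_mult using bf bg by (metis abs_ge_zero mult_le_one)
  qed measurable
  have "(\<integral>Z. f (fst (fst Z)) (fst (snd Z)) * g (snd (fst Z)) (snd (snd Z)) \<partial>((M \<Otimes>\<^sub>M M) \<Otimes>\<^sub>M (M \<Otimes>\<^sub>M M))) =
     (\<integral>u. (\<integral>v. f (fst u) (fst v) * g (snd u) (snd v) \<partial>(M \<Otimes>\<^sub>M M)) \<partial>(M \<Otimes>\<^sub>M M))"
    using PP2.integral_fst'[OF int] by simp
  also have "\<dots> = (\<integral>u. (\<integral>y. f (fst u) y \<partial>M) * (\<integral>y. g (snd u) y \<partial>M) \<partial>(M \<Otimes>\<^sub>M M))"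
  proof (rule Bochner_Integration.integral_cong)
    fix u :: "'a \<times> 'a"
    show "(\<integral>v. f (fst u) (fst v) * g (snd u) (snd v) \<partial>(M \<Otimes>\<^sub>M M)) = (\<integral>y. f (fst u) y \<partial>M) * (\<integral>y. g (snd u) y \<partial>M)"
    proof -
      have "(\<lambda>y. f (fst u) y) \<in> borel_measurable M" "(\<lambda>y. g (snd u) y) \<in> borel_measurable M"
        using sec by auto
      then show ?thesis using prod_int(2)[OF prob_space_axioms prob_space_axioms, of "f (fst u)" "g (snd u)" 1 1] bf bg by simp
    qed
  qed simp
  also have "\<dots> = (\<integral>x. (\<integral>y. f x y \<partial>M) \<partial>M) * (\<integral>x. (\<integral>y. g x y \<partial>M) \<partial>M)"
  proof (rule prod_int(2)[OF prob_space_axioms prob_space_axioms])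
    show "\<And>x. \<bar>\<integral>y. f x y \<partial>M\<bar> \<le> 1" using bf sec by (intro int_abs_le1) auto
    show "\<And>x. \<bar>\<integral>y. g x y \<partial>M\<bar> \<le> 1" using bg sec by (intro int_abs_le1) auto
  qed measurable
  also have "(\<integral>x. (\<integral>y. f x y \<partial>M) \<partial>M) = (\<integral>z. f (fst z) (snd z) \<partial>(M \<Otimes>\<^sub>M M))"
    using PP.integral_fst'[OF int_bdd2[where C=1, of "\<lambda>z. f (fst z) (snd z)"]] bf by simp
  also have "(\<integral>x. (\<integral>y. g x y \<partial>M) \<partial>M) = (\<integral>z. g (fst z) (snd z) \<partial>(M \<Otimes>\<^sub>M M))"
    using PP.integral_fst'[OF int_bdd2[where C=1, of "\<lambda>z. g (fst z) (snd z)"]] bg by simp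
  finally show ?thesis .
qed

end

context gr begin

definition Tt :: "('a \<times> 'a) \<times> ('a \<times> 'a) \<Rightarrow> real" where
  "Tt Z = W (fst (fst Z)) (fst (snd Z)) * W (snd (fst Z)) (snd (snd Z))"

definition w :: "'a set \<Rightarrow> 'a set \<Rightarrow> real" where
  "w A A' = (\<integral>z. W (fst z) (snd z) * indicator A (fst z) * indicator A' (snd z) \<partial>(M \<Otimes>\<^sub>M M))"

definition Phi :: "('a \<times> 'a \<Rightarrow> real) \<Rightarrow> real" where
  "Phi F = (\<integral>Z. (Tt Z - p\<^sup>2) * F (fst Z) * F (snd Z) \<partial>((M \<Otimes>\<^sub>M M) \<Otimes>\<^sub>M (M \<Otimes>\<^sub>M M)))"

lemma Tt_meas[measurable]: "Tt \<in> borel_measurable ((M \<Otimes>\<^sub>M M) \<Otimes>\<^sub>M (M \<Otimes>\<^sub>M M))"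
  unfolding Tt_def by measurable

lemma Tt_bnd: "0 \<le> Tt Z" "Tt Z \<le> 1"
  unfolding Tt_def using W0 W1 by (auto intro: mult_le_one)

lemma absL: "\<bar>Tt Z - p\<^sup>2\<bar> \<le> 1"
proof -
  have "0 \<le> p\<^sup>2" "p\<^sup>2 \<le> 1" using p01 by (auto simp: power_le_one)
  then show ?thesis unfolding abs_le_iff using Tt_bnd[of Z] zero_le_power2[of p] by linarith
qed

lemma w_eq: "A \<in> sets M \<Longrightarrow> A' \<in> sets M \<Longrightarrow> w A A' = B (indicator A) (indicator A') + p * (measure M A * measure M A')"
  unfolding w_def using B_ind_eq by simp

lemma rect:
  assumes [measurable]: "A \<in> sets M" "A' \<in> sets M" "E \<in> sets M" "E' \<in> sets M"
  shows "(\<integral>Z. (Tt Z - p\<^sup>2) * (c * indicator A (fst (fst Z)) * indicator E (snd (fst Z))) *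
      (c' * indicator A' (fst (snd Z)) * indicator E' (snd (snd Z))) \<partial>((M \<Otimes>\<^sub>M M) \<Otimes>\<^sub>M (M \<Otimes>\<^sub>M M)))
    = c * c' * (w A A' * w E E' - p\<^sup>2 * (measure M A * measure M E) * (measure M A' * measure M E'))"
proof -
  let ?P = "(M \<Otimes>\<^sub>M M) \<Otimes>\<^sub>M (M \<Otimes>\<^sub>M M)"
  define f where "f = (\<lambda>x y. W x y * indicator A x * indicator A' y :: real)"
  define g where "g = (\<lambda>x y. W x y * indicator E x * indicator E' y :: real)"
  define R where "R = (\<lambda>u::'a\<times>'a. indicator A (fst u) * indicator E (snd u) :: real)"
  define R' where "R' = (\<lambda>u::'a\<times>'a. indicator A' (fst u) * indicator E' (snd u) :: real)"
  have [measurable]: "case_prod f \<in> borel_measurable (M \<Otimes>\<^sub>M M)" "case_prod g \<in> borel_measurable (M \<Otimes>\<^sub>M M)"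
    unfolding f_def g_def by measurable
  have [measurable]: "R \<in> borel_measurable (M \<Otimes>\<^sub>M M)" "R' \<in> borel_measurable (M \<Otimes>\<^sub>M M)"
    unfolding R_def R'_def by measurable
  have bf: "\<bar>f x y\<bar> \<le> 1" "\<bar>g x y\<bar> \<le> 1" for x y
    unfolding f_def g_def using W0[of x y] W1[of x y] by (auto simp: indicator_def)
  have bR: "\<bar>R u\<bar> \<le> 1" "\<bar>R' u\<bar> \<le> 1" for u unfolding R_def R'_def by (auto simp: indicator_def)
  have eq: "(\<lambda>Z. (Tt Z - p\<^sup>2) * (c * indicator A (fst (fst Z)) * indicator E (snd (fst Z))) *
      (c' * indicator A' (fst (snd Z)) * indicator E' (snd (snd Z)))) =
    (\<lambda>Z. c * c' * (f (fst (fst Z)) (fst (snd Z)) * g (snd (fst Z)) (snd (snd Z)) - p\<^sup>2 * (R (fst Z) * R' (snd Z))))"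
    unfolding Tt_def f_def g_def R_def R'_def by (auto simp: fun_eq_iff algebra_simps)
  have i1: "integrable ?P (\<lambda>Z. f (fst (fst Z)) (fst (snd Z)) * g (snd (fst Z)) (snd (snd Z)))"
    using bf by (intro int_bdd4[where C=1]) (auto simp: abs_mult intro: mult_le_one)
  have pr: "prob_space (M \<Otimes>\<^sub>M M)" by (rule prob_space_pair[OF prob_space_axioms prob_space_axioms])
  have i2: "integrable ?P (\<lambda>Z. R (fst Z) * R' (snd Z))"
    using prod_int(1)[OF pr pr, of R R' 1 1] bR by simp
  have e2: "(\<integral>Z. R (fst Z) * R' (snd Z) \<partial>?P) = (measure M A * measure M E) * (measure M A' * measure M E')"
    using prod_int(2)[OF pr pr, of R R' 1 1] bR int_ind2 unfolding R_def R'_def by simp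
  have e1: "(\<integral>Z. f (fst (fst Z)) (fst (snd Z)) * g (snd (fst Z)) (snd (snd Z)) \<partial>?P) = w A A' * w E E'"
  proof -
    have "(\<integral>Z. f (fst (fst Z)) (fst (snd Z)) * g (snd (fst Z)) (snd (snd Z)) \<partial>?P) =
      (\<integral>z. f (fst z) (snd z) \<partial>(M \<Otimes>\<^sub>M M)) * (\<integral>z. g (fst z) (snd z) \<partial>(M \<Otimes>\<^sub>M M))"
      by (rule fubini4) (use bf in auto)
    also have "\<dots> = w A A' * w E E'" unfolding w_def f_def g_def by (simp add: mult.assoc)
    finally show ?thesis .
  qed
  show ?thesis unfolding eq using i1 i2 e1 e2 by simp
qed

end

context gr begin

lemma psd_B: assumes "\<And>k. A k \<in> sets M" shows "psd n (\<lambda>k l. B (indicator (A k)) (indicator (A l)))"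
  unfolding psd_def
proof
  fix d :: "nat \<Rightarrow> real"
  define f where "f = (\<lambda>x. \<Sum>k<n. d k * indicator (A k) x)"
  have sf: "simple_function M f" unfolding f_def using assms
    by (intro simple_function_sum simple_function_mult simple_function_indicator) auto
  have bi: "\<And>k. bdd (indicator (A k))" using assms bdd_ind by auto
  have bdi: "\<And>k. bdd (\<lambda>x. d k * indicator (A k) x)" using bi bdd_mult by auto
  have bf: "bdd f" by (rule bdd_simple[OF sf])
  have "B f f = (\<Sum>k<n. B (\<lambda>x. d k * indicator (A k) x) f)"
    unfolding f_def[of] using bdi bf[unfolded f_def] by (intro B_sum1) auto
  also have "\<dots> = (\<Sum>k<n. d k * B (indicator (A k)) f)" by (simp add: B_mult1)
  also have "\<dots> = (\<Sum>k<n. d k * (\<Sum>l<n. d l * B (indicator (A k)) (indicator (A l))))"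
  proof (rule sum.cong[OF refl])
    fix k
    have "B (indicator (A k)) f = (\<Sum>l<n. B (indicator (A k)) (\<lambda>x. d l * indicator (A l) x))"
      unfolding f_def using bdi bi by (intro B_sum2) auto
    also have "\<dots> = (\<Sum>l<n. d l * B (indicator (A k)) (indicator (A l)))" by (simp add: B_mult2)
    finally show "d k * B (indicator (A k)) f = d k * (\<Sum>l<n. d l * B (indicator (A k)) (indicator (A l)))" by simp
  qed
  also have "\<dots> = (\<Sum>k<n. \<Sum>l<n. d k * d l * B (indicator (A k)) (indicator (A l)))"
    by (simp add: sum_distrib_left mult.assoc)
  finally show "0 \<le> (\<Sum>k<n. \<Sum>l<n. d k * d l * B (indicator (A k)) (indicator (A l)))"
    using psd_simple[OF sf] by simp
qed

lemma Phi_sum: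
  assumes AE: "\<And>k. A k \<in> sets M" "\<And>k. E k \<in> sets M"
  shows "Phi (\<lambda>u. \<Sum>k<n. c k * indicator (A k) (fst u) * indicator (E k) (snd u)) =
    (\<Sum>k<n. \<Sum>l<n. c k * c l * (w (A k) (A l) * w (E k) (E l) -
        p\<^sup>2 * (measure M (A k) * measure M (E k)) * (measure M (A l) * measure M (E l))))"
proof -
  let ?P = "(M \<Otimes>\<^sub>M M) \<Otimes>\<^sub>M (M \<Otimes>\<^sub>M M)"
  define t where "t = (\<lambda>k l Z. (Tt Z - p\<^sup>2) * (c k * indicator (A k) (fst (fst Z)) * indicator (E k) (snd (fst Z))) *
      (c l * indicator (A l) (fst (snd Z)) * indicator (E l) (snd (snd Z))) :: real)"
  have [measurable]: "\<And>k. A k \<in> sets M" "\<And>k. E k \<in> sets M" using AE by auto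
  have it: "integrable ?P (t k l)" for k l
  proof (rule int_bdd4[where C="\<bar>c k\<bar> * \<bar>c l\<bar>"])
    show "t k l \<in> borel_measurable ?P" unfolding t_def by measurable
    fix Z
    have "\<bar>t k l Z\<bar> \<le> 1 * (\<bar>c k\<bar> * 1 * 1) * (\<bar>c l\<bar> * 1 * 1)"
      unfolding t_def abs_mult
      by (intro mult_mono absL) (auto simp: indicator_def)
    then show "\<bar>t k l Z\<bar> \<le> \<bar>c k\<bar> * \<bar>c l\<bar>" by simp
  qed
  have "Phi (\<lambda>u. \<Sum>k<n. c k * indicator (A k) (fst u) * indicator (E k) (snd u)) = (\<integral>Z. (\<Sum>k<n. \<Sum>l<n. t k l Z) \<partial>?P)"
    unfolding Phi_def t_def
  proof (rule Bochner_Integration.integral_cong[OF refl])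
    fix Z :: "('a \<times> 'a) \<times> ('a \<times> 'a)"
    show "(Tt Z - p\<^sup>2) * (\<Sum>k<n. c k * indicator (A k) (fst (fst Z)) * indicator (E k) (snd (fst Z))) *
         (\<Sum>k<n. c k * indicator (A k) (fst (snd Z)) * indicator (E k) (snd (snd Z))) =
      (\<Sum>k<n. \<Sum>l<n. (Tt Z - p\<^sup>2) * (c k * indicator (A k) (fst (fst Z)) * indicator (E k) (snd (fst Z))) *
         (c l * indicator (A l) (fst (snd Z)) * indicator (E l) (snd (snd Z))))"
      by (simp add: sum_distrib_left sum_distrib_right mult.assoc) (rule sum.swap)
  qed
  also have "\<dots> = (\<Sum>k<n. \<Sum>l<n. (\<integral>Z. t k l Z \<partial>?P))"
    using it by (simp add: Bochner_Integration.integral_sum Bochner_Integration.integrable_sum)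
  also have "\<dots> = (\<Sum>k<n. \<Sum>l<n. c k * c l * (w (A k) (A l) * w (E k) (E l) -
        p\<^sup>2 * (measure M (A k) * measure M (E k)) * (measure M (A l) * measure M (E l))))"
    unfolding t_def using AE by (intro sum.cong refl rect) auto
  finally show ?thesis .
qed

end

context gr begin

lemma Phi_rs_nonneg: assumes "rs F" shows "0 \<le> Phi F"
  using rs_repr[OF assms]
proof (elim exE conjE)
  fix n :: nat and c A E assume AE: "\<forall>k. A k \<in> sets M \<and> E k \<in> sets M"
    and F: "F = (\<lambda>u. \<Sum>k<n. c k * indicator (A k) (fst u) * indicator (E k) (snd u))"
  have A: "\<And>k. A k \<in> sets M" and E: "\<And>k. E k \<in> sets M" using AE by auto
  define a where "a = (\<lambda>k. measure M (A k))"
  define b where "b = (\<lambda>k. measure M (E k))"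
  define X where "X = (\<lambda>k l. B (indicator (A k)) (indicator (A l)))"
  define Y where "Y = (\<lambda>k l. B (indicator (E k)) (indicator (E l)))"
  have pX: "psd n X" unfolding X_def by (rule psd_B[OF A])
  have pY: "psd n Y" unfolding Y_def by (rule psd_B[OF E])
  have sX: "\<And>k l. X k l = X l k" unfolding X_def using A by (intro B_sym bdd_ind)
  have sY: "\<And>k l. Y k l = Y l k" unfolding Y_def using E by (intro B_sym bdd_ind)
  have "Phi F = (\<Sum>k<n. \<Sum>l<n. c k * c l * ((X k l + p * (a k * a l)) * (Y k l + p * (b k * b l)) -
        p\<^sup>2 * (a k * b k) * (a l * b l)))"
    unfolding F Phi_sum[OF A E] X_def Y_def a_def b_def using A E by (simp add: w_eq)
  also have "\<dots> = (\<Sum>k<n. \<Sum>l<n. (c k * c l * X k l) * Y k l) + p * (\<Sum>k<n. \<Sum>l<n. (c k * b k) * (c l * b l) * X k l)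
       + p * (\<Sum>k<n. \<Sum>l<n. (c k * a k) * (c l * a l) * Y k l)"
    by (simp add: sum.distrib sum_distrib_left power2_eq_square algebra_simps)
  also have "0 \<le> \<dots>"
  proof -
    have pX': "psd n (\<lambda>k l. c k * c l * X k l)" unfolding psd_def
    proof
      fix d :: "nat \<Rightarrow> real"
      have "0 \<le> (\<Sum>k<n. \<Sum>l<n. (d k * c k) * (d l * c l) * X k l)" using spec[OF pX[unfolded psd_def], of "\<lambda>k. d k * c k"] by simp
      also have "\<dots> = (\<Sum>k<n. \<Sum>l<n. d k * d l * (c k * c l * X k l))" by (simp add: algebra_simps)
      finally show "0 \<le> (\<Sum>k<n. \<Sum>l<n. d k * d l * (c k * c l * X k l))" .
    qed
    have "0 \<le> (\<Sum>k<n. \<Sum>l<n. (c k * c l * X k l) * Y k l)"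
      by (rule schur[OF _ sY pX' pY]) (simp add: sX mult.commute)
    moreover have "0 \<le> (\<Sum>k<n. \<Sum>l<n. (c k * b k) * (c l * b l) * X k l)" using spec[OF pX[unfolded psd_def], of "\<lambda>k. c k * b k"] by simp
    moreover have "0 \<le> (\<Sum>k<n. \<Sum>l<n. (c k * a k) * (c l * a l) * Y k l)" using spec[OF pY[unfolded psd_def], of "\<lambda>k. c k * a k"] by simp
    ultimately show ?thesis using p01 by simp
  qed
  finally show "0 \<le> Phi F" .
qed

end

context gr begin

lemma Phi_ind_nonneg: assumes VM[measurable]: "V \<in> sets (M \<Otimes>\<^sub>M M)" shows "0 \<le> Phi (indicator V)"
proof (rule field_le_epsilon)
  fix \<epsilon> :: real assume "0 < \<epsilon>"
  let ?P = "(M \<Otimes>\<^sub>M M) \<Otimes>\<^sub>M (M \<Otimes>\<^sub>M M)"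
  have pr: "prob_space (M \<Otimes>\<^sub>M M)" by (rule prob_space_pair[OF prob_space_axioms prob_space_axioms])
  define \<delta> where "\<delta> = min 1 (\<epsilon> / 3)"
  have d: "0 < \<delta>" "\<delta> \<le> 1" "3 * \<delta> \<le> \<epsilon>" using \<open>0 < \<epsilon>\<close> by (auto simp: \<delta>_def)
  obtain F where rF: "rs F" and FN: "(\<integral>u. \<bar>indicator V u - F u\<bar> \<partial>(M \<Otimes>\<^sub>M M)) < \<delta>"
    using approxV_all[OF VM] d unfolding approxV_def by blast
  obtain C where Fm[measurable]: "F \<in> borel_measurable (M \<Otimes>\<^sub>M M)" and C: "\<And>u. \<bar>F u\<bar> \<le> C"
    using rs_bdd[OF rF] by blast
  have C0: "0 \<le> C" using C[of undefined] by linarith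
  define e where "e = (\<lambda>u. indicator V u - F u :: real)"
  have em[measurable]: "e \<in> borel_measurable (M \<Otimes>\<^sub>M M)" unfolding e_def by measurable
  have eb: "\<bar>e u\<bar> \<le> 1 + C" for u using C[of u] unfolding e_def by (auto simp: indicator_def)
  define N where "N = (\<integral>u. \<bar>e u\<bar> \<partial>(M \<Otimes>\<^sub>M M))"
  have N: "0 \<le> N" "N < \<delta>" using FN unfolding N_def e_def by auto
  define nF where "nF = (\<integral>u. \<bar>F u\<bar> \<partial>(M \<Otimes>\<^sub>M M))"
  have nF: "nF \<le> N + 1"
  proof -
    have "nF \<le> (\<integral>u. \<bar>e u\<bar> + indicator V u \<partial>(M \<Otimes>\<^sub>M M))"
      unfolding nF_def
    proof (rule integral_mono)
      show "integrable (M \<Otimes>\<^sub>M M) (\<lambda>u. \<bar>F u\<bar>)" using C by (intro int_bdd2[where C=C]) auto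
      show "integrable (M \<Otimes>\<^sub>M M) (\<lambda>u. \<bar>e u\<bar> + indicator V u)"
      proof (rule int_bdd2[where C="2 + C"])
        fix u show "\<bar>\<bar>e u\<bar> + indicator V u\<bar> \<le> 2 + C" using eb[of u] by (auto simp: indicator_def)
      qed measurable
      fix u show "\<bar>F u\<bar> \<le> \<bar>e u\<bar> + indicator V u" unfolding e_def by (auto simp: indicator_def)
    qed
    also have "\<dots> = N + measure (M \<Otimes>\<^sub>M M) V"
    proof -
      have ie: "integrable (M \<Otimes>\<^sub>M M) (\<lambda>u. \<bar>e u\<bar>)" using eb by (intro int_bdd2[where C="1+C"]) auto
      have iV: "integrable (M \<Otimes>\<^sub>M M) (indicator V :: _ \<Rightarrow> real)" by (rule int_bdd2[where C=1]) (auto simp: indicator_def)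
      show ?thesis unfolding N_def using Bochner_Integration.integral_add[OF ie iV] by simp
    qed
    also have "\<dots> \<le> N + 1" by (simp add: PP.prob_le_1)
    finally show ?thesis .
  qed
  define L where "L = (\<lambda>Z. Tt Z - p\<^sup>2)"
  have Lm[measurable]: "L \<in> borel_measurable ?P" unfolding L_def by measurable
  have I1: "integrable ?P (\<lambda>Z. L Z * indicator V (fst Z) * indicator V (snd Z))"
    by (rule int_bdd4[where C=1]) (use absL in \<open>auto simp: L_def indicator_def\<close>)
  have I2: "integrable ?P (\<lambda>Z. L Z * F (fst Z) * F (snd Z))"
  proof (rule int_bdd4[where C="C * C"])
    fix Z
    show "\<bar>L Z * F (fst Z) * F (snd Z)\<bar> \<le> C * C"
    proof -
      have a: "\<bar>Tt Z - p\<^sup>2\<bar> * \<bar>F (fst Z)\<bar> \<le> 1 * C" by (rule mult_mono[OF absL C]) auto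
      have "\<bar>Tt Z - p\<^sup>2\<bar> * \<bar>F (fst Z)\<bar> * \<bar>F (snd Z)\<bar> \<le> (1 * C) * C" by (rule mult_mono[OF a C]) (auto simp: C0)
      then show ?thesis unfolding abs_mult L_def by simp
    qed
  qed measurable
  define G where "G = (\<lambda>Z. \<bar>e (fst Z)\<bar> * 1 + \<bar>F (fst Z)\<bar> * \<bar>e (snd Z)\<bar>)"
  have Ga: "integrable ?P (\<lambda>Z. \<bar>e (fst Z)\<bar> * 1)"
    using prod_int(1)[OF pr pr, of "\<lambda>u. \<bar>e u\<bar>" "\<lambda>_. 1" "1 + C" 1] eb by simp
  have Gb: "integrable ?P (\<lambda>Z. \<bar>F (fst Z)\<bar> * \<bar>e (snd Z)\<bar>)"
    using prod_int(1)[OF pr pr, of "\<lambda>u. \<bar>F u\<bar>" "\<lambda>u. \<bar>e u\<bar>" C "1 + C"] eb C by simp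
  have IG: "(\<integral>Z. G Z \<partial>?P) = N + nF * N"
  proof -
    have "(\<integral>Z. \<bar>e (fst Z)\<bar> * 1 \<partial>?P) = N * 1"
      using prod_int(2)[OF pr pr, of "\<lambda>u. \<bar>e u\<bar>" "\<lambda>_. 1" "1 + C" 1] eb unfolding N_def
      by (simp add: PP.prob_space)
    moreover have "(\<integral>Z. \<bar>F (fst Z)\<bar> * \<bar>e (snd Z)\<bar> \<partial>?P) = nF * N"
      using prod_int(2)[OF pr pr, of "\<lambda>u. \<bar>F u\<bar>" "\<lambda>u. \<bar>e u\<bar>" C "1 + C"] eb C unfolding N_def nF_def by simp
    ultimately show ?thesis unfolding G_def using Ga Gb by simp
  qed
  have "Phi (indicator V) - Phi F = (\<integral>Z. L Z * indicator V (fst Z) * indicator V (snd Z) - L Z * F (fst Z) * F (snd Z) \<partial>?P)"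
    unfolding Phi_def using Bochner_Integration.integral_diff[OF I1 I2] by (simp add: L_def)
  also have "\<dots> \<ge> (\<integral>Z. - G Z \<partial>?P)"
  proof (rule integral_mono)
    show "integrable ?P (\<lambda>Z. - G Z)" unfolding G_def using Ga Gb by simp
    show "integrable ?P (\<lambda>Z. L Z * indicator V (fst Z) * indicator V (snd Z) - L Z * F (fst Z) * F (snd Z))"
      using I1 I2 by simp
    fix Z :: "('a \<times> 'a) \<times> ('a \<times> 'a)"
    define u where "u = fst Z"
    define v where "v = snd Z"
    have id: "L Z * indicator V u * indicator V v - L Z * F u * F v = L Z * (e u * indicator V v + F u * e v)"
      unfolding e_def by (simp add: algebra_simps)
    have "\<bar>L Z * (e u * indicator V v + F u * e v)\<bar> \<le> 1 * \<bar>e u * indicator V v + F u * e v\<bar>"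
      unfolding abs_mult[of "L Z"] using absL[of Z] unfolding L_def by (intro mult_right_mono) auto
    also have "\<dots> \<le> \<bar>e u\<bar> * 1 + \<bar>F u\<bar> * \<bar>e v\<bar>"
    proof -
      have "\<bar>e u * indicator V v\<bar> \<le> \<bar>e u\<bar> * 1" by (auto simp: abs_mult indicator_def)
      moreover have "\<bar>e u * indicator V v + F u * e v\<bar> \<le> \<bar>e u * indicator V v\<bar> + \<bar>F u * e v\<bar>" by (rule abs_triangle_ineq)
      moreover have "\<bar>F u * e v\<bar> = \<bar>F u\<bar> * \<bar>e v\<bar>" by (rule abs_mult)
      ultimately show ?thesis by linarith
    qed
    finally show "- G Z \<le> L Z * indicator V (fst Z) * indicator V (snd Z) - L Z * F (fst Z) * F (snd Z)"
      unfolding G_def u_def[symmetric] v_def[symmetric] id by linarith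
  qed
  finally have "Phi F - (N + nF * N) \<le> Phi (indicator V)" using IG by simp
  moreover have "0 \<le> Phi F" by (rule Phi_rs_nonneg[OF rF])
  moreover have "nF * N \<le> (N + 1) * N" using nF N by (intro mult_right_mono) auto
  moreover have "(N + 1) * N \<le> 2 * \<delta>"
  proof -
    have "N * N \<le> 1 * N" using N d by (intro mult_right_mono) auto
    moreover have "(N + 1) * N = N * N + N" by (simp add: algebra_simps)
    ultimately show ?thesis using N d by linarith
  qed
  ultimately show "0 \<le> Phi (indicator V) + \<epsilon>" using N d by linarith
qed

end

context gr begin

lemma Wsec: "(\<lambda>y. W x y) \<in> borel_measurable M"
proof -
  have c1: "(\<lambda>_::'a. x) \<in> measurable M M" by (rule measurable_const, simp add: spM)
  have c2: "(\<lambda>y::'a. y) \<in> measurable M M" by measurable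
  show ?thesis using Wmeas[OF c1 c2] by simp
qed

lemma tensor_Tt: "tensor W (fst Z) (snd Z) = Tt Z"
  by (cases Z) (auto simp: tensor_def Tt_def split: prod.splits)

lemma tensor_meas: "case_prod (tensor W) \<in> borel_measurable ((M \<Otimes>\<^sub>M M) \<Otimes>\<^sub>M (M \<Otimes>\<^sub>M M))"
proof -
  have "case_prod (tensor W) = Tt" using tensor_Tt by (auto simp: fun_eq_iff split_beta)
  then show ?thesis using Tt_meas by simp
qed

lemma ld2: assumes VM[measurable]: "V \<in> sets (M \<Otimes>\<^sub>M M)"
  shows "p\<^sup>2 * (measure (M \<Otimes>\<^sub>M M) V)\<^sup>2 \<le> (LINT z:V \<times> V|(M \<Otimes>\<^sub>M M) \<Otimes>\<^sub>M (M \<Otimes>\<^sub>M M). tensor W (fst z) (snd z))"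
proof -
  let ?P = "(M \<Otimes>\<^sub>M M) \<Otimes>\<^sub>M (M \<Otimes>\<^sub>M M)"
  have pr: "prob_space (M \<Otimes>\<^sub>M M)" by (rule prob_space_pair[OF prob_space_axioms prob_space_axioms])
  have i1: "integrable ?P (\<lambda>Z. Tt Z * indicator V (fst Z) * indicator V (snd Z))"
    by (rule int_bdd4[where C=1]) (use Tt_bnd in \<open>auto simp: indicator_def\<close>)
  have iV: "\<bar>indicator V u :: real\<bar> \<le> 1" for u by (auto simp: indicator_def)
  have i2: "integrable ?P (\<lambda>Z. indicator V (fst Z) * indicator V (snd Z) :: real)"
    using prod_int(1)[OF pr pr, of "indicator V" "indicator V" 1 1] iV by simp
  have e2: "(\<integral>Z. indicator V (fst Z) * indicator V (snd Z) \<partial>?P) = (measure (M \<Otimes>\<^sub>M M) V)\<^sup>2"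
    using prod_int(2)[OF pr pr, of "indicator V" "indicator V" 1 1] iV by (simp add: power2_eq_square)
  have "Phi (indicator V) = (\<integral>Z. Tt Z * indicator V (fst Z) * indicator V (snd Z) - p\<^sup>2 * (indicator V (fst Z) * indicator V (snd Z)) \<partial>?P)"
    unfolding Phi_def by (rule Bochner_Integration.integral_cong) (auto simp: algebra_simps)
  also have "\<dots> = (\<integral>Z. Tt Z * indicator V (fst Z) * indicator V (snd Z) \<partial>?P) - p\<^sup>2 * (measure (M \<Otimes>\<^sub>M M) V)\<^sup>2"
    using i1 i2 e2 by simp
  also have "(\<integral>Z. Tt Z * indicator V (fst Z) * indicator V (snd Z) \<partial>?P) =
     (LINT z:V \<times> V|?P. tensor W (fst z) (snd z))"
    unfolding set_lebesgue_integral_def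
    by (rule Bochner_Integration.integral_cong) (auto simp: tensor_Tt indicator_times)
  finally show ?thesis using Phi_ind_nonneg[OF VM] by simp
qed

lemma reg2: "AE u in M \<Otimes>\<^sub>M M. (\<integral>v. tensor W u v \<partial>(M \<Otimes>\<^sub>M M)) = p\<^sup>2"
proof -
  have ae: "AE u in M \<Otimes>\<^sub>M M. (\<integral>y. W (fst u) y \<partial>M) = p \<and> (\<integral>y. W (snd u) y \<partial>M) = p"
  proof (rule PP.AE_pair_measure)
    show "{x \<in> space (M \<Otimes>\<^sub>M M). (\<integral>y. W (fst x) y \<partial>M) = p \<and> (\<integral>y. W (snd x) y \<partial>M) = p} \<in> sets (M \<Otimes>\<^sub>M M)"
      by measurable
    show "AE x in M. AE y in M. (\<integral>ya. W (fst (x, y)) ya \<partial>M) = p \<and> (\<integral>ya. W (snd (x, y)) ya \<partial>M) = p"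
      using reg
    proof eventually_elim
      case (elim x)
      show ?case using reg by eventually_elim (use elim in simp)
    qed
  qed
  then show ?thesis
  proof eventually_elim
    case (elim u)
    have m1: "(\<lambda>y. W (fst u) y) \<in> borel_measurable M" "(\<lambda>y. W (snd u) y) \<in> borel_measurable M"
      using Wsec by auto
    have "(\<integral>v. tensor W u v \<partial>(M \<Otimes>\<^sub>M M)) = (\<integral>v. W (fst u) (fst v) * W (snd u) (snd v) \<partial>(M \<Otimes>\<^sub>M M))"
      by (rule Bochner_Integration.integral_cong) (auto simp: tensor_def split: prod.splits)
    also have "\<dots> = (\<integral>y. W (fst u) y \<partial>M) * (\<integral>y. W (snd u) y \<partial>M)"
      using prod_int(2)[OF prob_space_axioms prob_space_axioms m1, of 1 1] W0 W1 by simp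
    finally show ?case using elim by (simp add: power2_eq_square)
  qed
qed

end

theorem lemma4p9:
  fixes M :: "('a::polish_space) measure" and W :: "'a \<Rightarrow> 'a \<Rightarrow> real" and p :: real
  assumes "atomless_standard_prob_space M"
    and "graphon M W" and "regular M p W" and "locally_dense M p W"
  shows "graphon (M \<Otimes>\<^sub>M M) (tensor W) \<and> regular (M \<Otimes>\<^sub>M M) (p\<^sup>2) (tensor W)
         \<and> locally_dense (M \<Otimes>\<^sub>M M) (p\<^sup>2) (tensor W)"
proof -
  have PS: "prob_space M" and SB: "sets M = sets borel" and AL: "atomless M"
    using assms(1) unfolding atomless_standard_prob_space_def by auto
  have spM: "space M = UNIV" using sets_eq_imp_space_eq[OF SB] by simp
  have pt: "measure M {x} = 0" for x
  proof (rule ccontr)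
    assume "measure M {x} \<noteq> 0"
    then have pos: "measure M {x} > 0" using measure_nonneg[of M "{x}"] by linarith
    have "{x} \<in> sets M" using SB by simp
    then obtain C where C: "C \<in> sets M" "C \<subseteq> {x}" "0 < measure M C" "measure M C < measure M {x}"
      using AL pos unfolding atomless_def by blast
    then have "C = {} \<or> C = {x}" by blast
    then show False using C by auto
  qed
  have G: "case_prod W \<in> borel_measurable (M \<Otimes>\<^sub>M M)" "\<And>x y. W x y = W y x" "\<And>x y. 0 \<le> W x y" "\<And>x y. W x y \<le> 1"
    using assms(2) spM unfolding graphon_def by auto
  have "gr M W p"
    unfolding gr_def gr_axioms_def
  proof (intro conjI allI impI)
    show "prob_space M" by (rule PS)
    show "space M = UNIV" by (rule spM)
    show "AE x in M. (\<integral>y. W x y \<partial>M) = p" using assms(3) unfolding regular_def .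
  next
    fix U assume "U \<in> sets M"
    then show "p * (measure M U)\<^sup>2 \<le> (LINT z:U \<times> U|M \<Otimes>\<^sub>M M. W (fst z) (snd z))"
      using assms(4) unfolding locally_dense_def by auto
  next
    fix \<epsilon> :: real assume "0 < \<epsilon>"
    then show "\<exists>P N. (\<forall>n. P n \<in> sets M) \<and> disjoint_family_on P {..N::nat} \<and>
       (\<Union>n\<le>N. P n) = UNIV \<and> (\<forall>n. measure M (P n) < \<epsilon>)"
      using small_partition[OF PS SB pt] by blast
  qed (use G in auto)
  then interpret gr M W p .
  have g2: "graphon (M \<Otimes>\<^sub>M M) (tensor W)"
    unfolding graphon_def
  proof (intro conjI ballI)
    show "case_prod (tensor W) \<in> borel_measurable ((M \<Otimes>\<^sub>M M) \<Otimes>\<^sub>M (M \<Otimes>\<^sub>M M))" by (rule tensor_meas)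
    fix x y :: "'a \<times> 'a"
    show "tensor W x y = tensor W y x" by (cases x, cases y) (simp add: tensor_def G(2))
    show "0 \<le> tensor W x y" by (cases x, cases y) (simp add: tensor_def G(3))
    show "tensor W x y \<le> 1" by (cases x, cases y) (simp add: tensor_def G(3) G(4) mult_le_one)
  qed
  have r2: "regular (M \<Otimes>\<^sub>M M) (p\<^sup>2) (tensor W)" unfolding regular_def by (rule reg2)
  have l2: "locally_dense (M \<Otimes>\<^sub>M M) (p\<^sup>2) (tensor W)" unfolding locally_dense_def using ld2 by blast
  show ?thesis using g2 r2 l2 by blast
qed

end
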